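(* Consider the setting described in the context, and fix an initial pair $(t,x)$, i.e. $t\in\mathbb{T}$ and $x\in L^2_{\mathcal{F}}(t;\mathbb{R}^n)$. The following statements are equivalent. (i) There exists an open-loop equilibrium control of Problem (LQ) for the initial pair $(t,x)$. (ii) There exists a control $u^{t,x,*}\in L^2_{\mathcal{F}}(\mathbb{T}_t;\mathbb{R}^m)$ such that, letting $X^{t,x,*}$ be defined by $$X^{t,x,*}_{k+1}=A_{k,k}X^{t,x,*}_k+B_{k,k}u^{t,x,*}_k+\big(C_{k,k}X^{t,x,*}_k+D_{k,k}u^{t,x,*}_k\big)w_k,\quad X^{t,x,*}_t=x,\ k\in\mathbb{T}_t,$$ for every $k\in\mathbb{T}_t$ the forward-backward stochastic difference equation $$\begin{cases}X^{k,*}_{\ell+1}=A_{k,\ell}X^{k,*}_\ell+B_{k,\ell}u^{t,x,*}_\ell+\big(C_{k,\ell}X^{k,*}_\ell+D_{k,\ell}u^{t,x,*}_\ell\big)w_\ell,\\ Z^{k,*}_\ell=A_{k,\ell}^T\mathbb{E}(Z^{k,*}_{\ell+1}\mid\mathcal{F}_{\ell-1})+C_{k,\ell}^T\mathbb{E}(Z^{k,*}_{\ell+1}w_\ell\mid\mathcal{F}_{\ell-1})+Q_{k,\ell}X^{k,*}_\ell,\\ X^{k,*}_k=X^{t,x,*}_k,\quad Z^{k,*}_N=G_kX^{k,*}_N,\quad \ell\in\mathbb{T}_k\end{cases}$$ has a solution $(X^{k,*},Z^{k,*})$ satisfying the stationary condition $$0=R_{k,k}u^{t,x,*}_k+B_{k,k}^T\mathbb{E}(Z^{k,*}_{k+1}\mid\mathcal{F}_{k-1})+D_{k,k}^T\mathbb{E}(Z^{k,*}_{k+1}w_k\mid\mathcal{F}_{k-1}),$$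 and the convexity condition $$\inf_{\bar u_k\in L^2_{\mathcal{F}}(k;\mathbb{R}^m)}\Big\{\sum_{\ell=k}^{N-1}\mathbb{E}\big[(Y^k_\ell)^TQ_{k,\ell}Y^k_\ell\big]+\mathbb{E}\big[\bar u_k^TR_{k,k}\bar u_k\big]+\mathbb{E}\big[(Y^k_N)^TG_kY^k_N\big]\Big\}\ge 0$$ holds, where $Y^k$ is given by $Y^k_k=0$, $Y^k_{k+1}=B_{k,k}\bar u_k+D_{k,k}\bar u_kw_k$, and $Y^k_{\ell+1}=A_{k,\ell}Y^k_\ell+C_{k,\ell}Y^k_\ell w_\ell$ for $\ell\in\mathbb{T}_{k+1}$. Furthermore, any $u^{t,x,*}$ as in (ii) is an open-loop equilibrium control of Problem (LQ) for the initial pair $(t,x)$.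
   Context: Let $N$ be a positive integer, $\mathbb{T}=\{0,1,\dots,N-1\}$, $\mathbb{T}_t=\{t,\dots,N-1\}$ and $\widetilde{\mathbb{T}}_t=\{t,\dots,N\}$. On a probability space $(\Omega,\mathcal{F},P)$, $\{w_k\}$ is a scalar martingale difference sequence with $\mathbb{E}[w_{k+1}\mid\mathcal{F}_k]=0$ and $\mathbb{E}[w_{k+1}^2\mid\mathcal{F}_k]=1$ for $k\ge0$, where $\mathcal{F}_k=\sigma\{x_0,w_l,\ l=0,\dots,k\}$ and $\mathcal{F}_{-1}=\{\emptyset,\Omega\}$. For a Euclidean space $\mathcal{H}$, $L^2_{\mathcal{F}}(\mathbb{T}_t;\mathcal{H})$ is the set of $\mathcal{H}$-valued processes $\nu=\{\nu_k,k\in\mathbb{T}_t\}$ with each $\nu_k$ $\mathcal{F}_{k-1}$-measurable and $\sum_{k=t}^{N-1}\mathbb{E}|\nu_k|^2<\infty$; $L^2_{\mathcal{F}}(k;\mathcal{H})$ is the set of $\mathcal{F}_{k-1}$-measurable $\mathcal{H}$-valued random variables $\xi$ with $\mathbb{E}|\xi|^2<\infty$. For each $t\in\mathbb{T}$, $k\in\mathbb{T}_t$, let $A_{t,k},C_{t,k}\in\mathbb{R}^{n\times n}$, $B_{t,k},D_{t,k}\in\mathbb{R}^{n\times m}$ be deterministic matrices and $Q_{t,k}\in\mathbb{R}^{n\times n}$, $R_{t,k}\in\mathbb{R}^{m\times m}$, $G_t\in\mathbb{R}^{n\times n}$ deterministic symmetric matrices (no definiteness assumed). For $t\in\mathbb{T}$,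 $y\in L^2_{\mathcal{F}}(t;\mathbb{R}^n)$ and $u\in L^2_{\mathcal{F}}(\mathbb{T}_t;\mathbb{R}^m)$, the state $X^t$ solves $X^t_{k+1}=A_{t,k}X^t_k+B_{t,k}u_k+(C_{t,k}X^t_k+D_{t,k}u_k)w_k$, $X^t_t=y$, $k\in\mathbb{T}_t$, and the cost is $$J(t,y;u)=\sum_{k=t}^{N-1}\mathbb{E}\big[(X^t_k)^TQ_{t,k}X^t_k+u_k^TR_{t,k}u_k\big]+\mathbb{E}\big[(X^t_N)^TG_tX^t_N\big].$$ Problem (LQ) is to minimize $J(t,x;u)$ over $u\in L^2_{\mathcal{F}}(\mathbb{T}_t;\mathbb{R}^m)$. A control $u^{t,x,*}\in L^2_{\mathcal{F}}(\mathbb{T}_t;\mathbb{R}^m)$ is an open-loop equilibrium control of Problem (LQ) for the initial pair $(t,x)$ if for every $k\in\mathbb{T}_t$ and every $u_k\in L^2_{\mathcal{F}}(k;\mathbb{R}^m)$, $$J(k,X^{t,x,*}_k;u^{t,x,*}|_{\mathbb{T}_k})\le J(k,X^{t,x,*}_k;(u_k,u^{t,x,*}|_{\mathbb{T}_{k+1}})),$$ where $u^{t,x,*}|_{\mathbb{T}_k}$ denotes restriction to $\mathbb{T}_k$, $(u_k,u^{t,x,*}|_{\mathbb{T}_{k+1}})$ is the control equal to $u_k$ at time $k$ and to $u^{t,x,*}$ afterwards, and $X^{t,x,*}_{k+1}=A_{k,k}X^{t,x,*}_k+B_{k,k}u^{t,x,*}_k+(C_{k,k}X^{t,x,*}_k+D_{k,k}u^{t,x,*}_k)w_k$,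 $X^{t,x,*}_t=x$. *)

theory Defs
  imports "HOL-Probability.Probability"
begin

text \<open>Filtration.  Fprev M x0 w j is the sigma-algebra F_{j-1}: Fprev 0 = F_{-1} = {{},Omega},
  Fprev (Suc k) = F_k = sigma{x0, w_0, ..., w_k}.\<close>
definition Fprev :: "'a measure \<Rightarrow> ('a \<Rightarrow> real^'n) \<Rightarrow> (nat \<Rightarrow> 'a \<Rightarrow> real) \<Rightarrow> nat \<Rightarrow> 'a measure" where
  "Fprev M x0 w j = (if j = 0 then sigma (space M) {}
     else sigma (space M)
       ({x0 -` A \<inter> space M | A. A \<in> sets borel} \<union>
        {w l -` B \<inter> space M | l B. l \<le> j - 1 \<and> B \<in> sets borel}))"

definition cexp :: "'a measure \<Rightarrow> 'a measure \<Rightarrow> ('a \<Rightarrow> real^'n) \<Rightarrow> 'a \<Rightarrow> real^'n" where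
  "cexp M F Z = (\<lambda>\<omega>. \<chi> i. real_cond_exp M F (\<lambda>\<eta>. Z \<eta> $ i) \<omega>)"

definition L2k :: "'a measure \<Rightarrow> ('a \<Rightarrow> real^'n) \<Rightarrow> (nat \<Rightarrow> 'a \<Rightarrow> real) \<Rightarrow> nat
    \<Rightarrow> ('a \<Rightarrow> real^'m) set" where
  "L2k M x0 w k = {\<xi>. \<xi> \<in> borel_measurable (Fprev M x0 w k) \<and>
                       integrable M (\<lambda>\<omega>. (norm (\<xi> \<omega>))\<^sup>2)}"

text \<open>L^2_F(T_t;H): processes on {t..N-1} with nu_k in L^2_F(k;H) (the sum of finitely many
  finite second moments is finite).  Values outside T_t are irrelevant.\<close>
definition L2proc :: "'a measure \<Rightarrow> ('a \<Rightarrow> real^'n) \<Rightarrow> (nat \<Rightarrow> 'a \<Rightarrow> real) \<Rightarrow> nat \<Rightarrow> nat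
    \<Rightarrow> (nat \<Rightarrow> 'a \<Rightarrow> real^'m) set" where
  "L2proc M x0 w N t = {\<nu>. \<forall>k\<in>{t..<N}. \<nu> k \<in> L2k M x0 w k}"

primrec traj_aux :: "(nat \<Rightarrow> real^'n^'n) \<Rightarrow> (nat \<Rightarrow> real^'m^'n) \<Rightarrow> (nat \<Rightarrow> real^'n^'n)
    \<Rightarrow> (nat \<Rightarrow> real^'m^'n) \<Rightarrow> (nat \<Rightarrow> 'a \<Rightarrow> real) \<Rightarrow> nat \<Rightarrow> ('a \<Rightarrow> real^'n)
    \<Rightarrow> (nat \<Rightarrow> 'a \<Rightarrow> real^'m) \<Rightarrow> nat \<Rightarrow> 'a \<Rightarrow> real^'n" where
  "traj_aux a b c d w s y u 0 = y"
| "traj_aux a b c d w s y u (Suc i) = (\<lambda>\<omega>.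
     a (s+i) *v traj_aux a b c d w s y u i \<omega> + b (s+i) *v u (s+i) \<omega>
     + (w (s+i) \<omega>) *\<^sub>R (c (s+i) *v traj_aux a b c d w s y u i \<omega> + d (s+i) *v u (s+i) \<omega>))"

definition traj :: "(nat \<Rightarrow> real^'n^'n) \<Rightarrow> (nat \<Rightarrow> real^'m^'n) \<Rightarrow> (nat \<Rightarrow> real^'n^'n)
    \<Rightarrow> (nat \<Rightarrow> real^'m^'n) \<Rightarrow> (nat \<Rightarrow> 'a \<Rightarrow> real) \<Rightarrow> nat \<Rightarrow> ('a \<Rightarrow> real^'n)
    \<Rightarrow> (nat \<Rightarrow> 'a \<Rightarrow> real^'m) \<Rightarrow> nat \<Rightarrow> 'a \<Rightarrow> real^'n" where
  "traj a b c d w s y u l = traj_aux a b c d w s y u (l - s)"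

definition Jcost :: "'a measure \<Rightarrow> (nat \<Rightarrow> nat \<Rightarrow> real^'n^'n) \<Rightarrow> (nat \<Rightarrow> nat \<Rightarrow> real^'m^'n)
    \<Rightarrow> (nat \<Rightarrow> nat \<Rightarrow> real^'n^'n) \<Rightarrow> (nat \<Rightarrow> nat \<Rightarrow> real^'m^'n)
    \<Rightarrow> (nat \<Rightarrow> nat \<Rightarrow> real^'n^'n) \<Rightarrow> (nat \<Rightarrow> nat \<Rightarrow> real^'m^'m) \<Rightarrow> (nat \<Rightarrow> real^'n^'n)
    \<Rightarrow> (nat \<Rightarrow> 'a \<Rightarrow> real) \<Rightarrow> nat \<Rightarrow> nat \<Rightarrow> ('a \<Rightarrow> real^'n) \<Rightarrow> (nat \<Rightarrow> 'a \<Rightarrow> real^'m) \<Rightarrow> real" where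
  "Jcost M A B C D Q R G w N t y u =
     (let X = traj (A t) (B t) (C t) (D t) w t y u in
      (\<Sum>k=t..<N. (\<integral>\<omega>. X k \<omega> \<bullet> (Q t k *v X k \<omega>) + u k \<omega> \<bullet> (R t k *v u k \<omega>) \<partial>M))
      + (\<integral>\<omega>. X N \<omega> \<bullet> (G t *v X N \<omega>) \<partial>M))"

definition eqstate :: "(nat \<Rightarrow> nat \<Rightarrow> real^'n^'n) \<Rightarrow> (nat \<Rightarrow> nat \<Rightarrow> real^'m^'n)
    \<Rightarrow> (nat \<Rightarrow> nat \<Rightarrow> real^'n^'n) \<Rightarrow> (nat \<Rightarrow> nat \<Rightarrow> real^'m^'n)
    \<Rightarrow> (nat \<Rightarrow> 'a \<Rightarrow> real) \<Rightarrow> nat \<Rightarrow> ('a \<Rightarrow> real^'n) \<Rightarrow> (nat \<Rightarrow> 'a \<Rightarrow> real^'m) \<Rightarrow> nat \<Rightarrow> 'a \<Rightarrow> real^'n" where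
  "eqstate A B C D w t x u = traj (\<lambda>k. A k k) (\<lambda>k. B k k) (\<lambda>k. C k k) (\<lambda>k. D k k) w t x u"

text \<open>Open-loop equilibrium control for the initial pair (t,x).  The perturbed control
  (u_k, u*|T_{k+1}) is u*(k := ubar); J(k,.,.) only uses the control on T_k.\<close>
definition open_loop_equilibrium where
  "open_loop_equilibrium M x0 A B C D Q R G w N t x u \<longleftrightarrow>
     u \<in> L2proc M x0 w N t \<and>
     (\<forall>k\<in>{t..<N}. \<forall>ubar\<in>L2k M x0 w k.
        Jcost M A B C D Q R G w N k (eqstate A B C D w t x u k) u
          \<le> Jcost M A B C D Q R G w N k (eqstate A B C D w t x u k) (u(k := ubar)))"

definition cond_ii where
  "cond_ii M x0 A B C D Q R G w N t x u \<longleftrightarrow>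
     u \<in> L2proc M x0 w N t \<and>
     (\<forall>k\<in>{t..<N}.
        (let Xk = traj (A k) (B k) (C k) (D k) w k (eqstate A B C D w t x u k) u;
             F = Fprev M x0 w in
         (\<exists>Z :: nat \<Rightarrow> _ \<Rightarrow> real^_.
            (\<forall>l\<in>{k..N}. Z l \<in> borel_measurable M \<and> integrable M (\<lambda>\<omega>. (norm (Z l \<omega>))\<^sup>2)) \<and>
            (\<forall>l\<in>{k..<N}. AE \<omega> in M. Z l \<omega> =
                 transpose (A k l) *v cexp M (F l) (Z (Suc l)) \<omega>
               + transpose (C k l) *v cexp M (F l) (\<lambda>\<eta>. w l \<eta> *\<^sub>R Z (Suc l) \<eta>) \<omega>
               + Q k l *v Xk l \<omega>) \<and>
            (AE \<omega> in M. Z N \<omega> = G k *v Xk N \<omega>) \<and>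
            (AE \<omega> in M. 0 = R k k *v u k \<omega>
               + transpose (B k k) *v cexp M (F k) (Z (Suc k)) \<omega>
               + transpose (D k k) *v cexp M (F k) (\<lambda>\<eta>. w k \<eta> *\<^sub>R Z (Suc k) \<eta>) \<omega>))
         \<and>
         (INF ubar\<in>L2k M x0 w k.
            (let Y = traj (A k) (B k) (C k) (D k) w k (\<lambda>\<omega>. 0) (\<lambda>l. if l = k then ubar else (\<lambda>\<omega>. 0)) in
             ereal ((\<Sum>l=k..<N. (\<integral>\<omega>. Y l \<omega> \<bullet> (Q k l *v Y l \<omega>) \<partial>M))
                    + (\<integral>\<omega>. ubar \<omega> \<bullet> (R k k *v ubar \<omega>) \<partial>M)
                    + (\<integral>\<omega>. Y N \<omega> \<bullet> (G k *v Y N \<omega>) \<partial>M)))) \<ge> 0))"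

end

theory Submission
  imports Defs
begin


lemma vec_borel_measurableI:
  fixes f :: "'a \<Rightarrow> real^'n"
  assumes "\<And>i. (\<lambda>x. f x $ i) \<in> borel_measurable M"
  shows "f \<in> borel_measurable M"
proof -
  have "\<forall>b\<in>Basis. (\<lambda>x. f x \<bullet> b) \<in> borel_measurable M"
  proof
    fix b :: "real^'n" assume "b \<in> Basis"
    then have "b \<in> (\<Union>i. \<Union>u\<in>(Basis::real set). {axis i u})" by (simp only: Basis_vec_def)
    then obtain i where bi: "b = axis i 1" by (simp only: Basis_real_def) blast
    have "(\<lambda>x. f x \<bullet> b) = (\<lambda>x. f x $ i)"
      unfolding bi by (rule ext) (simp only: inner_axis inner_real_def mult_1_right)
    then show "(\<lambda>x. f x \<bullet> b) \<in> borel_measurable M"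
      using assms[of i] by (simp only:)
  qed
  then show ?thesis using borel_measurable_euclidean_space[of f M] by blast
qed

lemma borel_measurable_blin:
  assumes "bounded_linear L" "f \<in> borel_measurable M"
  shows "(\<lambda>x. L (f x)) \<in> borel_measurable M"
proof -
  have "L \<in> borel_measurable borel"
    by (intro borel_measurable_continuous_onI linear_continuous_on assms(1))
  from measurable_compose[OF assms(2) this] show ?thesis .
qed

lemma borel_measurable_mv [measurable (raw)]:
  fixes A :: "real^'n^'m"
  assumes "f \<in> borel_measurable M"
  shows "(\<lambda>x. A *v f x) \<in> borel_measurable M"
  using borel_measurable_blin[OF matrix_vector_mul_bounded_linear assms] .

lemma norm_sq_vec: "(norm (x::real^'n))\<^sup>2 = (\<Sum>i\<in>UNIV. (x $ i)\<^sup>2)"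
  by (simp only: power2_norm_eq_inner) (simp add: inner_vec_def power2_eq_square)

locale lqs = prob_space M for M :: "'a measure" +
  fixes x0 :: "'a \<Rightarrow> real^'n" and w :: "nat \<Rightarrow> 'a \<Rightarrow> real"
  assumes x0m: "x0 \<in> borel_measurable M"
    and wm: "\<And>k. w k \<in> borel_measurable M"
    and wsq: "\<And>k. integrable M (\<lambda>\<omega>. (w k \<omega>)\<^sup>2)"
    and wce: "\<And>k. AE \<omega> in M. real_cond_exp M (Fprev M x0 w k) (\<lambda>\<omega>. (w k \<omega>)\<^sup>2) \<omega> = 1"
begin

abbreviation "FF j \<equiv> Fprev M x0 w j"

definition gen :: "nat \<Rightarrow> 'a set set" where
  "gen j = {x0 -` A \<inter> space M | A. A \<in> sets borel} \<union>
        {w l -` B \<inter> space M | l B. l \<le> j - 1 \<and> B \<in> sets borel}"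

lemma gen_sub: "gen j \<subseteq> Pow (space M)" unfolding gen_def by auto

lemma gen_sets: "gen j \<subseteq> sets M"
  unfolding gen_def using x0m wm by (auto intro!: measurable_sets)

lemma FF_eq: "FF j = (if j = 0 then sigma (space M) {} else sigma (space M) (gen j))"
  unfolding Fprev_def gen_def by simp

lemma space_FF [simp]: "space (FF j) = space M"
  unfolding FF_eq using gen_sub by auto

lemma sets_FF: "sets (FF j) = (if j = 0 then sigma_sets (space M) {} else sigma_sets (space M) (gen j))"
  unfolding FF_eq using gen_sub by (auto simp: sets_measure_of)

lemma sets_FF_mono: "i \<le> j \<Longrightarrow> sets (FF i) \<subseteq> sets (FF j)"
proof -
  assume "i \<le> j"
  have g: "0 < i \<Longrightarrow> gen i \<subseteq> gen j"
  proof -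
    assume "0 < i"
    have "{w l -` B \<inter> space M | l B. l \<le> i - 1 \<and> B \<in> sets borel} \<subseteq>
          {w l -` B \<inter> space M | l B. l \<le> j - 1 \<and> B \<in> sets borel}"
    proof -
      have mono: "\<And>l. l \<le> i - 1 \<Longrightarrow> l \<le> j - 1" using \<open>i \<le> j\<close> by arith
      show ?thesis using mono by blast
    qed
    then show ?thesis unfolding gen_def by blast
  qed
  show ?thesis
  proof (cases "i = 0")
    case True
    have "sigma_sets (space M) {} \<subseteq> sigma_sets (space M) (gen j)" by (rule sigma_sets_mono') simp
    then show ?thesis using True unfolding sets_FF by simp
  next
    case False
    then show ?thesis using \<open>i \<le> j\<close> g by (simp add: sets_FF sigma_sets_mono')
  qed
qed

lemma subalg_FF: "subalgebra M (FF j)"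
proof -
  have "sigma_sets (space M) (gen j) \<subseteq> sets M"
    using gen_sets by (simp add: sets.sigma_sets_subset)
  moreover have "sigma_sets (space M) {} \<subseteq> sets M"
    by (simp add: sets.sigma_sets_subset)
  ultimately show ?thesis unfolding subalgebra_def sets_FF by auto
qed

lemma sfs_FF: "sigma_finite_subalgebra M (FF j)"
proof -
  have "finite_measure_subalgebra M (FF j)"
    unfolding finite_measure_subalgebra_def finite_measure_subalgebra_axioms_def
    using subalg_FF finite_measure_axioms by blast
  then show ?thesis by (rule finite_measure_subalgebra_is_sigma_finite)
qed

lemma FF_meas_M: "f \<in> borel_measurable (FF j) \<Longrightarrow> f \<in> borel_measurable M"
  using measurable_from_subalg[OF subalg_FF] by blast

lemma FF_mono: "i \<le> j \<Longrightarrow> f \<in> borel_measurable (FF i) \<Longrightarrow> f \<in> borel_measurable (FF j)"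
  using measurable_from_subalg[of "FF j" "FF i"] sets_FF_mono
  unfolding subalgebra_def by auto

lemma w_FF: "w l \<in> borel_measurable (FF (Suc l))"
proof (rule measurableI)
  fix B :: "real set" assume "B \<in> sets borel"
  then have "w l -` B \<inter> space M \<in> gen (Suc l)" unfolding gen_def by auto
  then show "w l -` B \<inter> space (FF (Suc l)) \<in> sets (FF (Suc l))"
    unfolding sets_FF by auto
qed auto

end



lemma rat_disc:
  fixes b c :: real
  assumes H: "\<forall>q\<in>\<rat>. 0 \<le> c - 2 * q * b + q\<^sup>2"
  shows "b\<^sup>2 \<le> c"
proof (rule ccontr)
  assume "\<not> b\<^sup>2 \<le> c"
  define d where "d = b\<^sup>2 - c"
  have d: "d > 0" using \<open>\<not> b\<^sup>2 \<le> c\<close> unfolding d_def by simp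
  obtain q where q: "q \<in> \<rat>" "b < q" "q < b + min 1 d"
    using Rats_dense_in_real[of b "b + min 1 d"] d by auto
  have "(q - b)\<^sup>2 \<le> (q - b)"
    using q by (simp add: power2_eq_square mult_le_cancel_right1)
  also have "\<dots> < d" using q by simp
  finally have "(q - b)\<^sup>2 < d" .
  moreover have "c - 2 * q * b + q\<^sup>2 = (q - b)\<^sup>2 - d"
    unfolding d_def by (simp add: power2_eq_square algebra_simps)
  moreover have "0 \<le> c - 2 * q * b + q\<^sup>2" using H q(1) by blast
  ultimately show False by linarith
qed

lemma enn2real_eq_1D: "enn2real x = 1 \<Longrightarrow> x = 1"
  using enn2real_eq_posreal_iff[of 1 x] by simp

lemma sq_ineq1: "((a::real) + b)\<^sup>2 \<le> 2 * a\<^sup>2 + 2 * b\<^sup>2"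
proof -
  have "((a::real) + b)\<^sup>2 = 2 * a\<^sup>2 + 2 * b\<^sup>2 - (a - b)\<^sup>2"
    by (simp add: power2_eq_square algebra_simps)
  moreover have "0 \<le> (a - b)\<^sup>2" by simp
  ultimately show ?thesis by linarith
qed

lemma sq_ineq2: "\<bar>(a::real) * b\<bar> \<le> a\<^sup>2 + b\<^sup>2"
proof -
  have "2 * \<bar>a * b\<bar> = a\<^sup>2 + b\<^sup>2 - (\<bar>a\<bar> - \<bar>b\<bar>)\<^sup>2"
    by (simp add: power2_eq_square algebra_simps abs_mult)
  moreover have "0 \<le> (\<bar>a\<bar> - \<bar>b\<bar>)\<^sup>2" by simp
  moreover have "0 \<le> \<bar>a * b\<bar>" by simp
  ultimately show ?thesis by linarith
qed

context lqs
begin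

definition sq :: "('a \<Rightarrow> 'b::euclidean_space) \<Rightarrow> bool" where
  "sq f \<longleftrightarrow> f \<in> borel_measurable M \<and> integrable M (\<lambda>\<omega>. (norm (f \<omega>))\<^sup>2)"

lemma sqI: "f \<in> borel_measurable M \<Longrightarrow> integrable M (\<lambda>\<omega>. (norm (f \<omega>))\<^sup>2) \<Longrightarrow> sq f"
  unfolding sq_def by simp

lemma sq_meas: "sq f \<Longrightarrow> f \<in> borel_measurable M" unfolding sq_def by simp
lemma sq_int: "sq f \<Longrightarrow> integrable M (\<lambda>\<omega>. (norm (f \<omega>))\<^sup>2)" unfolding sq_def by simp

lemma sq_0: "sq (\<lambda>\<omega>. 0)" unfolding sq_def by simp

lemma sq_add:
  assumes "sq f" "sq g"
  shows "sq (\<lambda>\<omega>. f \<omega> + g \<omega>)"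
proof (rule sqI)
  show "(\<lambda>\<omega>. f \<omega> + g \<omega>) \<in> borel_measurable M"
    using sq_meas[OF assms(1)] sq_meas[OF assms(2)] by (rule borel_measurable_add)
  have i: "integrable M (\<lambda>\<omega>. 2 * (norm (f \<omega>))\<^sup>2 + 2 * (norm (g \<omega>))\<^sup>2)"
    using sq_int[OF assms(1)] sq_int[OF assms(2)] by auto
  show "integrable M (\<lambda>\<omega>. (norm (f \<omega> + g \<omega>))\<^sup>2)"
  proof (rule Bochner_Integration.integrable_bound[OF i])
    have [measurable]: "f \<in> borel_measurable M" "g \<in> borel_measurable M"
      using sq_meas[OF assms(1)] sq_meas[OF assms(2)] .
    show "(\<lambda>\<omega>. (norm (f \<omega> + g \<omega>))\<^sup>2) \<in> borel_measurable M" by measurable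
    show "AE x in M. norm ((norm (f x + g x))\<^sup>2) \<le> norm (2 * (norm (f x))\<^sup>2 + 2 * (norm (g x))\<^sup>2)"
    proof (rule AE_I2)
      fix x
      have n: "norm (f x + g x) \<le> norm (f x) + norm (g x)" by (rule norm_triangle_ineq)
      have "(norm (f x + g x))\<^sup>2 \<le> (norm (f x) + norm (g x))\<^sup>2"
        using n by (simp add: power_mono)
      also have "\<dots> \<le> 2 * (norm (f x))\<^sup>2 + 2 * (norm (g x))\<^sup>2"
        by (rule sq_ineq1)
      finally show "norm ((norm (f x + g x))\<^sup>2) \<le> norm (2 * (norm (f x))\<^sup>2 + 2 * (norm (g x))\<^sup>2)"
        by simp
    qed
  qed
qed

lemma sq_blin:
  assumes L: "bounded_linear L" and f: "sq f"
  shows "sq (\<lambda>\<omega>. L (f \<omega>))"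
proof (rule sqI)
  show m: "(\<lambda>\<omega>. L (f \<omega>)) \<in> borel_measurable M"
    using borel_measurable_blin[OF L sq_meas[OF f]] .
  obtain K where K: "\<And>x. norm (L x) \<le> norm x * K" "K > 0"
    using bounded_linear.pos_bounded[OF L] by blast
  have i: "integrable M (\<lambda>\<omega>. K\<^sup>2 * (norm (f \<omega>))\<^sup>2)" using sq_int[OF f] by auto
  show "integrable M (\<lambda>\<omega>. (norm (L (f \<omega>)))\<^sup>2)"
  proof (rule Bochner_Integration.integrable_bound[OF i])
    show "(\<lambda>\<omega>. (norm (L (f \<omega>)))\<^sup>2) \<in> borel_measurable M" using m by measurable
    show "AE x in M. norm ((norm (L (f x)))\<^sup>2) \<le> norm (K\<^sup>2 * (norm (f x))\<^sup>2)"
    proof (rule AE_I2)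
      fix x
      have "(norm (L (f x)))\<^sup>2 \<le> (norm (f x) * K)\<^sup>2"
        using K(1)[of "f x"] by (simp add: power_mono)
      then show "norm ((norm (L (f x)))\<^sup>2) \<le> norm (K\<^sup>2 * (norm (f x))\<^sup>2)"
        by (simp add: power_mult_distrib mult.commute)
    qed
  qed
qed

lemma sq_mv: "sq f \<Longrightarrow> sq (\<lambda>\<omega>. (A::real^'p^'q) *v f \<omega>)"
  by (rule sq_blin[OF matrix_vector_mul_bounded_linear])

lemma sq_scaleR: "sq f \<Longrightarrow> sq (\<lambda>\<omega>. c *\<^sub>R f \<omega>)"
  by (rule sq_blin[OF bounded_linear_scaleR_right])

lemma sq_uminus: "sq f \<Longrightarrow> sq (\<lambda>\<omega>. - f \<omega>)"
  using sq_scaleR[of f "-1"] by simp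

lemma sq_diff: "sq f \<Longrightarrow> sq g \<Longrightarrow> sq (\<lambda>\<omega>. f \<omega> - g \<omega>)"
  using sq_add[of f "\<lambda>\<omega>. - g \<omega>"] sq_uminus[of g] by simp

lemma sq_comp: "sq (f :: 'a \<Rightarrow> real^'p) \<Longrightarrow> sq (\<lambda>\<omega>. f \<omega> $ i)"
  by (rule sq_blin[OF bounded_linear_vec_nth])

lemma sq_inner:
  assumes "sq f" "sq g"
  shows "integrable M (\<lambda>\<omega>. f \<omega> \<bullet> g \<omega>)"
proof -
  have i: "integrable M (\<lambda>\<omega>. (norm (f \<omega>))\<^sup>2 + (norm (g \<omega>))\<^sup>2)"
    using sq_int[OF assms(1)] sq_int[OF assms(2)] by auto
  show ?thesis
  proof (rule Bochner_Integration.integrable_bound[OF i])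
    have [measurable]: "f \<in> borel_measurable M" "g \<in> borel_measurable M"
      using sq_meas[OF assms(1)] sq_meas[OF assms(2)] .
    show "(\<lambda>\<omega>. f \<omega> \<bullet> g \<omega>) \<in> borel_measurable M" by measurable
    show "AE x in M. norm (f x \<bullet> g x) \<le> norm ((norm (f x))\<^sup>2 + (norm (g x))\<^sup>2)"
    proof (rule AE_I2)
      fix x
      have "\<bar>f x \<bullet> g x\<bar> \<le> norm (f x) * norm (g x)" by (rule Cauchy_Schwarz_ineq2)
      also have "\<dots> \<le> (norm (f x))\<^sup>2 + (norm (g x))\<^sup>2"
        using sq_ineq2[of "norm (f x)" "norm (g x)"] by simp
      finally show "norm (f x \<bullet> g x) \<le> norm ((norm (f x))\<^sup>2 + (norm (g x))\<^sup>2)" by simp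
    qed
  qed
qed

lemma sq_mult: "sq (f :: 'a \<Rightarrow> real) \<Longrightarrow> sq g \<Longrightarrow> integrable M (\<lambda>\<omega>. f \<omega> * g \<omega>)"
  using sq_inner[of f g] by simp

lemma sq_vecI:
  fixes f :: "'a \<Rightarrow> real^'p"
  assumes "\<And>i. sq (\<lambda>\<omega>. f \<omega> $ i)"
  shows "sq f"
proof (rule sqI)
  show "f \<in> borel_measurable M"
    using assms sq_meas by (intro vec_borel_measurableI) blast
  have "integrable M (\<lambda>\<omega>. \<Sum>i\<in>UNIV. (f \<omega> $ i)\<^sup>2)"
  proof -
    have "\<And>i. integrable M (\<lambda>\<omega>. (f \<omega> $ i)\<^sup>2)" using sq_int[OF assms] by simp
    then show ?thesis by simp
  qed
  then show "integrable M (\<lambda>\<omega>. (norm (f \<omega>))\<^sup>2)" by (simp add: norm_sq_vec)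
qed

lemma L2k_sq: "\<xi> \<in> L2k M x0 w k \<Longrightarrow> sq \<xi>"
  unfolding L2k_def sq_def using FF_meas_M by blast

lemma L2k_FF: "\<xi> \<in> L2k M x0 w k \<Longrightarrow> \<xi> \<in> borel_measurable (FF k)"
  unfolding L2k_def by blast

lemma L2kI: "\<xi> \<in> borel_measurable (FF k) \<Longrightarrow> sq \<xi> \<Longrightarrow> \<xi> \<in> L2k M x0 w k"
  unfolding L2k_def sq_def by blast

lemma nn_ce_w: "AE \<omega> in M. nn_cond_exp M (FF l) (\<lambda>\<omega>. ennreal ((w l \<omega>)\<^sup>2)) \<omega> = 1"
proof -
  interpret S: sigma_finite_subalgebra M "FF l" by (rule sfs_FF)
  have z: "(\<lambda>\<omega>. ennreal (- (w l \<omega>)\<^sup>2)) = (\<lambda>\<omega>. 0)"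
    by (rule ext) (simp add: ennreal_neg)
  have "AE \<omega> in M. 0 = nn_cond_exp M (FF l) (\<lambda>\<omega>. 0) \<omega>"
    by (rule S.nn_cond_exp_F_meas) simp
  with wce[of l] show ?thesis
    unfolding real_cond_exp_def z
    by eventually_elim (auto intro: enn2real_eq_1D)
qed

lemma sq_wmult:
  assumes fF: "f \<in> borel_measurable (FF l)" and f: "sq f"
  shows "sq (\<lambda>\<omega>. w l \<omega> *\<^sub>R f \<omega>)"
proof (rule sqI)
  interpret S: sigma_finite_subalgebra M "FF l" by (rule sfs_FF)
  show "(\<lambda>\<omega>. w l \<omega> *\<^sub>R f \<omega>) \<in> borel_measurable M"
    using wm sq_meas[OF f] by auto
  have phiF: "(\<lambda>\<omega>. ennreal ((norm (f \<omega>))\<^sup>2)) \<in> borel_measurable (FF l)" using fF by measurable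
  have wM: "(\<lambda>\<omega>. ennreal ((w l \<omega>)\<^sup>2)) \<in> borel_measurable M" using wm by measurable
  have "(\<integral>\<^sup>+\<omega>. ennreal ((norm (w l \<omega> *\<^sub>R f \<omega>))\<^sup>2) \<partial>M)
      = (\<integral>\<^sup>+\<omega>. ennreal ((norm (f \<omega>))\<^sup>2) * ennreal ((w l \<omega>)\<^sup>2) \<partial>M)"
    by (intro nn_integral_cong) (simp add: power_mult_distrib ennreal_mult mult.commute)
  also have "\<dots> = (\<integral>\<^sup>+\<omega>. ennreal ((norm (f \<omega>))\<^sup>2) * nn_cond_exp M (FF l) (\<lambda>\<omega>. ennreal ((w l \<omega>)\<^sup>2)) \<omega> \<partial>M)"
    by (rule S.nn_cond_exp_intg[OF phiF wM, symmetric])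
  also have "\<dots> = (\<integral>\<^sup>+\<omega>. ennreal ((norm (f \<omega>))\<^sup>2) \<partial>M)"
    by (rule nn_integral_cong_AE) (use nn_ce_w[of l] in eventually_elim, simp)
  also have "\<dots> = ennreal (\<integral>\<omega>. (norm (f \<omega>))\<^sup>2 \<partial>M)"
    by (rule nn_integral_eq_integral[OF sq_int[OF f]]) simp
  finally have "(\<integral>\<^sup>+\<omega>. ennreal ((norm (w l \<omega> *\<^sub>R f \<omega>))\<^sup>2) \<partial>M) < \<infinity>" by simp
  then show "integrable M (\<lambda>\<omega>. (norm (w l \<omega> *\<^sub>R f \<omega>))\<^sup>2)"
    using wm sq_meas[OF f] by (intro integrableI_nonneg) auto
qed


lemma sq_real: "f \<in> borel_measurable M \<Longrightarrow> integrable M (\<lambda>\<omega>. (f \<omega>)\<^sup>2) \<Longrightarrow> sq (f :: 'a \<Rightarrow> real)"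
  by (rule sqI) simp_all

lemma sq_real_int: "sq (f :: 'a \<Rightarrow> real) \<Longrightarrow> integrable M (\<lambda>\<omega>. (f \<omega>)\<^sup>2)"
  using sq_int[of f] by simp

lemma ce_cs:
  fixes g f :: "'a \<Rightarrow> real"
  assumes gm: "g \<in> borel_measurable M" and g2: "integrable M (\<lambda>\<omega>. (g \<omega>)\<^sup>2)"
    and ga: "AE \<omega> in M. real_cond_exp M (FF j) (\<lambda>\<omega>. (g \<omega>)\<^sup>2) \<omega> = 1"
    and fm: "f \<in> borel_measurable M" and f2: "integrable M (\<lambda>\<omega>. (f \<omega>)\<^sup>2)"
  shows "integrable M (\<lambda>\<omega>. (real_cond_exp M (FF j) (\<lambda>\<omega>. g \<omega> * f \<omega>) \<omega>)\<^sup>2)"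
proof -
  interpret S: sigma_finite_subalgebra M "FF j" by (rule sfs_FF)
  have [measurable]: "g \<in> borel_measurable M" "f \<in> borel_measurable M" using gm fm .
  have sg: "sq g" "sq f" using sq_real gm g2 fm f2 by auto
  have gf: "integrable M (\<lambda>\<omega>. g \<omega> * f \<omega>)" by (rule sq_mult[OF sg])
  define b where "b = real_cond_exp M (FF j) (\<lambda>\<omega>. g \<omega> * f \<omega>)"
  define c where "c = real_cond_exp M (FF j) (\<lambda>\<omega>. (f \<omega>)\<^sup>2)"
  have key: "AE \<omega> in M. 0 \<le> c \<omega> - 2 * q * b \<omega> + q\<^sup>2" for q :: real
  proof -
    have i1: "integrable M (\<lambda>\<omega>. (f \<omega>)\<^sup>2 - 2 * q * (g \<omega> * f \<omega>))" using f2 gf by auto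
    have i2: "integrable M (\<lambda>\<omega>. q\<^sup>2 * (g \<omega>)\<^sup>2)" using g2 by auto
    have i3: "integrable M (\<lambda>\<omega>. 2 * q * (g \<omega> * f \<omega>))" using gf by auto
    have e1: "AE \<omega> in M. real_cond_exp M (FF j) (\<lambda>\<omega>. ((f \<omega>)\<^sup>2 - 2 * q * (g \<omega> * f \<omega>)) + q\<^sup>2 * (g \<omega>)\<^sup>2) \<omega>
        = real_cond_exp M (FF j) (\<lambda>\<omega>. (f \<omega>)\<^sup>2 - 2 * q * (g \<omega> * f \<omega>)) \<omega>
          + real_cond_exp M (FF j) (\<lambda>\<omega>. q\<^sup>2 * (g \<omega>)\<^sup>2) \<omega>"
      by (rule S.real_cond_exp_add[OF i1 i2])
    have e2: "AE \<omega> in M. real_cond_exp M (FF j) (\<lambda>\<omega>. (f \<omega>)\<^sup>2 - 2 * q * (g \<omega> * f \<omega>)) \<omega>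
        = c \<omega> - real_cond_exp M (FF j) (\<lambda>\<omega>. 2 * q * (g \<omega> * f \<omega>)) \<omega>"
      unfolding c_def by (rule S.real_cond_exp_diff[OF f2 i3])
    have e3: "AE \<omega> in M. real_cond_exp M (FF j) (\<lambda>\<omega>. 2 * q * (g \<omega> * f \<omega>)) \<omega> = 2 * q * b \<omega>"
      unfolding b_def by (rule S.real_cond_exp_cmult[OF gf])
    have e4: "AE \<omega> in M. real_cond_exp M (FF j) (\<lambda>\<omega>. q\<^sup>2 * (g \<omega>)\<^sup>2) \<omega>
        = q\<^sup>2 * real_cond_exp M (FF j) (\<lambda>\<omega>. (g \<omega>)\<^sup>2) \<omega>"
      by (rule S.real_cond_exp_cmult[OF g2])
    have pos: "AE \<omega> in M. 0 \<le> real_cond_exp M (FF j) (\<lambda>\<omega>. ((f \<omega>)\<^sup>2 - 2 * q * (g \<omega> * f \<omega>)) + q\<^sup>2 * (g \<omega>)\<^sup>2) \<omega>"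
    proof (rule S.real_cond_exp_pos)
      show "AE \<omega> in M. 0 \<le> (f \<omega>)\<^sup>2 - 2 * q * (g \<omega> * f \<omega>) + q\<^sup>2 * (g \<omega>)\<^sup>2"
      proof (rule AE_I2)
        fix \<omega>
        have "(f \<omega>)\<^sup>2 - 2 * q * (g \<omega> * f \<omega>) + q\<^sup>2 * (g \<omega>)\<^sup>2 = (f \<omega> - q * g \<omega>)\<^sup>2"
          by (simp add: power2_eq_square algebra_simps)
        then show "0 \<le> (f \<omega>)\<^sup>2 - 2 * q * (g \<omega> * f \<omega>) + q\<^sup>2 * (g \<omega>)\<^sup>2" by simp
      qed
    qed measurable
    from e1 e2 e3 e4 pos ga show ?thesis
      by eventually_elim simp
  qed
  have "AE \<omega> in M. \<forall>q\<in>\<rat>. 0 \<le> c \<omega> - 2 * q * b \<omega> + q\<^sup>2"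
    using key by (subst AE_ball_countable[OF countable_rat]) blast
  then have bc: "AE \<omega> in M. (b \<omega>)\<^sup>2 \<le> c \<omega>"
    by eventually_elim (rule rat_disc)
  have ci: "integrable M c" unfolding c_def by (rule S.real_cond_exp_int(1)[OF f2])
  show ?thesis
    unfolding b_def[symmetric]
  proof (rule Bochner_Integration.integrable_bound[OF ci])
    show "(\<lambda>\<omega>. (b \<omega>)\<^sup>2) \<in> borel_measurable M" unfolding b_def by measurable
    from bc show "AE x in M. norm ((b x)\<^sup>2) \<le> norm (c x)"
      by eventually_elim simp
  qed
qed

lemma cexp_nth: "cexp M F Z \<omega> $ i = real_cond_exp M F (\<lambda>\<eta>. Z \<eta> $ i) \<omega>"
  by (simp add: cexp_def)

lemma cexp_FF: "cexp M (FF j) Z \<in> borel_measurable (FF j)"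
  by (rule vec_borel_measurableI) (simp add: cexp_nth)

lemma cexp_M: "cexp M (FF j) Z \<in> borel_measurable M"
  by (rule FF_meas_M[OF cexp_FF])

lemma cexp_sq_g:
  fixes Z :: "'a \<Rightarrow> real^'p" and g :: "'a \<Rightarrow> real"
  assumes Z: "sq Z" and gm: "g \<in> borel_measurable M" and g2: "integrable M (\<lambda>\<omega>. (g \<omega>)\<^sup>2)"
    and ga: "AE \<omega> in M. real_cond_exp M (FF j) (\<lambda>\<omega>. (g \<omega>)\<^sup>2) \<omega> = 1"
  shows "sq (cexp M (FF j) (\<lambda>\<eta>. g \<eta> *\<^sub>R Z \<eta>))"
proof (rule sq_vecI)
  fix i
  have zi: "sq (\<lambda>\<omega>. Z \<omega> $ i)" by (rule sq_comp[OF Z])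
  show "sq (\<lambda>\<omega>. cexp M (FF j) (\<lambda>\<eta>. g \<eta> *\<^sub>R Z \<eta>) \<omega> $ i)"
    unfolding cexp_nth
  proof (rule sq_real)
    show "integrable M (\<lambda>\<omega>. (real_cond_exp M (FF j) (\<lambda>\<eta>. (g \<eta> *\<^sub>R Z \<eta>) $ i) \<omega>)\<^sup>2)"
      using ce_cs[OF gm g2 ga sq_meas[OF zi] sq_real_int[OF zi]] by simp
  qed simp
qed

lemma ce_one: "AE \<omega> in M. real_cond_exp M (FF j) (\<lambda>\<omega>. ((\<lambda>_. 1::real) \<omega>)\<^sup>2) \<omega> = 1"
proof -
  interpret S: sigma_finite_subalgebra M "FF j" by (rule sfs_FF)
  show ?thesis using S.real_cond_exp_F_meas[of "\<lambda>_. 1::real"] by simp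
qed

lemma cexp_sq:
  fixes Z :: "'a \<Rightarrow> real^'p"
  assumes Z: "sq Z"
  shows "sq (cexp M (FF j) Z)"
  using cexp_sq_g[OF Z _ _ ce_one, of j] by simp

lemma cexp_w_sq:
  fixes Z :: "'a \<Rightarrow> real^'p"
  assumes Z: "sq Z"
  shows "sq (cexp M (FF l) (\<lambda>\<eta>. w l \<eta> *\<^sub>R Z \<eta>))"
  by (rule cexp_sq_g[OF Z wm wsq wce])

lemma cexp_inner:
  fixes Z V :: "'a \<Rightarrow> real^'p"
  assumes V: "V \<in> borel_measurable (FF j)" and Zm: "Z \<in> borel_measurable M"
    and I: "\<And>i. integrable M (\<lambda>\<omega>. V \<omega> $ i * Z \<omega> $ i)"
  shows "(\<integral>\<omega>. V \<omega> \<bullet> cexp M (FF j) Z \<omega> \<partial>M) = (\<integral>\<omega>. V \<omega> \<bullet> Z \<omega> \<partial>M)"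
proof -
  interpret S: sigma_finite_subalgebra M "FF j" by (rule sfs_FF)
  have Vi: "(\<lambda>\<omega>. V \<omega> $ i) \<in> borel_measurable (FF j)" for i
    using borel_measurable_blin[OF bounded_linear_vec_nth V] .
  have Zi: "(\<lambda>\<omega>. Z \<omega> $ i) \<in> borel_measurable M" for i
    using borel_measurable_blin[OF bounded_linear_vec_nth Zm] .
  note R = S.real_cond_exp_intg[OF I Vi Zi]
  have "(\<integral>\<omega>. V \<omega> \<bullet> cexp M (FF j) Z \<omega> \<partial>M)
      = (\<integral>\<omega>. (\<Sum>i\<in>UNIV. V \<omega> $ i * real_cond_exp M (FF j) (\<lambda>\<eta>. Z \<eta> $ i) \<omega>) \<partial>M)"
    by (simp add: inner_vec_def cexp_nth)
  also have "\<dots> = (\<Sum>i\<in>UNIV. (\<integral>\<omega>. V \<omega> $ i * real_cond_exp M (FF j) (\<lambda>\<eta>. Z \<eta> $ i) \<omega> \<partial>M))"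
    using R(1) by simp
  also have "\<dots> = (\<Sum>i\<in>UNIV. (\<integral>\<omega>. V \<omega> $ i * Z \<omega> $ i \<partial>M))"
    by (simp add: R(2))
  also have "\<dots> = (\<integral>\<omega>. (\<Sum>i\<in>UNIV. V \<omega> $ i * Z \<omega> $ i) \<partial>M)"
    using I by simp
  also have "\<dots> = (\<integral>\<omega>. V \<omega> \<bullet> Z \<omega> \<partial>M)"
    by (simp add: inner_vec_def)
  finally show ?thesis .
qed

end



lemma traj_start [simp]: "traj a b c d w s y u s = y"
  by (simp add: traj_def)

lemma traj_Suc:
  "s \<le> l \<Longrightarrow> traj a b c d w s y u (Suc l) = (\<lambda>\<omega>. a l *v traj a b c d w s y u l \<omega> + b l *v u l \<omega>
     + w l \<omega> *\<^sub>R (c l *v traj a b c d w s y u l \<omega> + d l *v u l \<omega>))"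
  by (simp add: traj_def Suc_diff_le)

lemma traj_aux_add:
  "traj_aux a b c d w s (\<lambda>\<omega>. y1 \<omega> + y2 \<omega>) (\<lambda>l \<omega>. u1 l \<omega> + u2 l \<omega>) i \<omega>
   = traj_aux a b c d w s y1 u1 i \<omega> + traj_aux a b c d w s y2 u2 i \<omega>"
  by (induction i arbitrary: \<omega>) (simp_all add: matrix_vector_right_distrib scaleR_right_distrib algebra_simps)

lemma traj_add:
  "traj a b c d w s (\<lambda>\<omega>. y1 \<omega> + y2 \<omega>) (\<lambda>l \<omega>. u1 l \<omega> + u2 l \<omega>) l \<omega>
   = traj a b c d w s y1 u1 l \<omega> + traj a b c d w s y2 u2 l \<omega>"
  unfolding traj_def by (rule traj_aux_add)

lemma traj_aux_scale:
  "traj_aux a b c d w s (\<lambda>\<omega>. r *\<^sub>R y \<omega>) (\<lambda>l \<omega>. r *\<^sub>R u l \<omega>) i \<omega>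
   = r *\<^sub>R traj_aux a b c d w s y u i \<omega>"
  by (induction i arbitrary: \<omega>) (simp_all add: matrix_vector_mult_scaleR scaleR_right_distrib algebra_simps)

lemma traj_scale:
  "traj a b c d w s (\<lambda>\<omega>. r *\<^sub>R y \<omega>) (\<lambda>l \<omega>. r *\<^sub>R u l \<omega>) l \<omega>
   = r *\<^sub>R traj a b c d w s y u l \<omega>"
  unfolding traj_def by (rule traj_aux_scale)


definition cvx where
  "cvx M A B C D Q R G w N k ubar =
     (let Y = traj (A k) (B k) (C k) (D k) w k (\<lambda>\<omega>. 0) (\<lambda>l. if l = k then ubar else (\<lambda>\<omega>. 0)) in
             ((\<Sum>l=k..<N. (\<integral>\<omega>. Y l \<omega> \<bullet> (Q k l *v Y l \<omega>) \<partial>M))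
                    + (\<integral>\<omega>. ubar \<omega> \<bullet> (R k k *v ubar \<omega>) \<partial>M)
                    + (\<integral>\<omega>. Y N \<omega> \<bullet> (G k *v Y N \<omega>) \<partial>M)))"

definition lam where
  "lam M x0 w B D R k u Z = (\<lambda>\<omega>. R k k *v u k \<omega>
               + transpose (B k k) *v cexp M (Fprev M x0 w k) (Z (Suc k)) \<omega>
               + transpose (D k k) *v cexp M (Fprev M x0 w k) (\<lambda>\<eta>. w k \<eta> *\<^sub>R Z (Suc k) \<eta>) \<omega>)"

lemma inner_transpose: "(x::real^'p) \<bullet> (transpose (A::real^'p^'q) *v z) = (A *v x) \<bullet> z"
proof -
  have "x \<bullet> (transpose A *v z) = (z v* A) \<bullet> x" by (simp add: inner_commute)
  also have "\<dots> = z \<bullet> (A *v x)" by (rule dot_lmul_matrix)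
  finally show ?thesis by (simp add: inner_commute)
qed

lemma inner_sym: "transpose Q = Q \<Longrightarrow> (x::real^'p) \<bullet> (Q *v y) = y \<bullet> (Q *v x)"
  using inner_transpose[of x Q y] by (simp add: inner_commute)

lemma quad_expand:
  assumes "transpose Q = Q"
  shows "((x::real^'p) + y) \<bullet> (Q *v (x + y)) = x \<bullet> (Q *v x) + 2 * (y \<bullet> (Q *v x)) + y \<bullet> (Q *v y)"
  using inner_sym[OF assms, of x y]
  by (simp add: matrix_vector_right_distrib inner_add_left inner_add_right)


primrec zrec where
  "zrec M x0 w A C Q G N k X 0 = (\<lambda>\<omega>. G k *v X N \<omega>)"
| "zrec M x0 w A C Q G N k X (Suc i) = (\<lambda>\<omega>.
      transpose (A k (N - Suc i)) *v cexp M (Fprev M x0 w (N - Suc i)) (zrec M x0 w A C Q G N k X i) \<omega>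
    + transpose (C k (N - Suc i)) *v cexp M (Fprev M x0 w (N - Suc i))
         (\<lambda>\<eta>. w (N - Suc i) \<eta> *\<^sub>R zrec M x0 w A C Q G N k X i \<eta>) \<omega>
    + Q k (N - Suc i) *v X (N - Suc i) \<omega>)"

definition zz where "zz M x0 w A C Q G N k X l = zrec M x0 w A C Q G N k X (N - l)"

lemma zz_N: "zz M x0 w A C Q G N k X N = (\<lambda>\<omega>. G k *v X N \<omega>)"
  by (simp add: zz_def)

lemma zz_step: "l < N \<Longrightarrow> zz M x0 w A C Q G N k X l = (\<lambda>\<omega>.
      transpose (A k l) *v cexp M (Fprev M x0 w l) (zz M x0 w A C Q G N k X (Suc l)) \<omega>
    + transpose (C k l) *v cexp M (Fprev M x0 w l) (\<lambda>\<eta>. w l \<eta> *\<^sub>R zz M x0 w A C Q G N k X (Suc l) \<eta>) \<omega>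
    + Q k l *v X l \<omega>)"
proof -
  assume l: "l < N"
  then have e: "N - l = Suc (N - Suc l)" and e2: "N - Suc (N - Suc l) = l" by auto
  show ?thesis unfolding zz_def e zrec.simps e2 ..
qed

lemma quad_nonneg:
  fixes a b :: real
  assumes H: "\<And>r. 0 \<le> 2 * r * a + r\<^sup>2 * b"
  shows "0 \<le> b" "a = 0"
proof -
  have "0 \<le> 2 * a + b" using H[of 1] by simp
  moreover have "0 \<le> - 2 * a + b" using H[of "-1"] by simp
  ultimately show b: "0 \<le> b" by linarith
  show "a = 0"
  proof (rule ccontr)
    assume a: "a \<noteq> 0"
    define r where "r = - a / (b + 1)"
    have b1: "b + 1 > 0" using b by simp
    have rb: "r * (b + 1) = - a" unfolding r_def using b1 by simp
    have e1: "(b + 1)\<^sup>2 * (2 * r * a + r\<^sup>2 * b) = 2 * a * (r * (b + 1)) * (b + 1) + (r * (b + 1))\<^sup>2 * b"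
      by (simp add: power2_eq_square algebra_simps)
    also have "\<dots> = - (a\<^sup>2 * (b + 2))" unfolding rb by (simp add: power2_eq_square algebra_simps)
    finally have e: "(b + 1)\<^sup>2 * (2 * r * a + r\<^sup>2 * b) = - (a\<^sup>2 * (b + 2))" .
    have "0 < a\<^sup>2 * (b + 2)" using a b by simp
    moreover have "0 \<le> (b + 1)\<^sup>2 * (2 * r * a + r\<^sup>2 * b)" using H[of r] by simp
    ultimately show False using e by linarith
  qed
qed


lemma cvx_scale:
  "cvx M A B C D Q R G w N k (\<lambda>\<omega>. r *\<^sub>R v \<omega>) = r\<^sup>2 * cvx M A B C D Q R G w N k v"
proof -
  have Yr: "traj (A k) (B k) (C k) (D k) w k (\<lambda>\<omega>. 0) (\<lambda>l. if l = k then (\<lambda>\<omega>. r *\<^sub>R v \<omega>) else (\<lambda>\<omega>. 0)) l \<omega>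
      = r *\<^sub>R traj (A k) (B k) (C k) (D k) w k (\<lambda>\<omega>. 0) (\<lambda>l. if l = k then v else (\<lambda>\<omega>. 0)) l \<omega>" for l \<omega>
  proof -
    have e1: "(\<lambda>l. if l = k then (\<lambda>\<omega>. r *\<^sub>R v \<omega>) else (\<lambda>\<omega>. 0)) = (\<lambda>l \<omega>. r *\<^sub>R (if l = k then v else (\<lambda>\<omega>. 0)) \<omega>)"
      by (auto simp: fun_eq_iff)
    have "traj (A k) (B k) (C k) (D k) w k (\<lambda>\<omega>. r *\<^sub>R (\<lambda>\<omega>. 0) \<omega>) (\<lambda>l \<omega>. r *\<^sub>R (if l = k then v else (\<lambda>\<omega>. 0)) \<omega>) l \<omega>
      = r *\<^sub>R traj (A k) (B k) (C k) (D k) w k (\<lambda>\<omega>. 0) (\<lambda>l. if l = k then v else (\<lambda>\<omega>. 0)) l \<omega>"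
      by (rule traj_scale)
    then show ?thesis unfolding e1 by simp
  qed
  show ?thesis
    unfolding cvx_def Let_def Yr
    by (simp add: matrix_vector_mult_scaleR sum_distrib_left power2_eq_square algebra_simps)
qed

context lqs
begin

lemma traj_L2:
  fixes a c :: "nat \<Rightarrow> real^'n^'n" and b d :: "nat \<Rightarrow> real^'m^'n"
  assumes y: "y \<in> L2k M x0 w s" and u: "\<forall>l\<in>{s..<N}. u l \<in> L2k M x0 w l"
  shows "s \<le> l \<Longrightarrow> l \<le> N \<Longrightarrow> traj a b c d w s y u l \<in> L2k M x0 w l"
proof (induction l)
  case 0
  then show ?case using y by simp
next
  case (Suc l)
  show ?case
  proof (cases "s = Suc l")
    case True
    then show ?thesis using y by simp
  next
    case False
    then have sl: "s \<le> l" "l < N" using Suc.prems by auto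
    let ?X = "traj a b c d w s y u l"
    have X: "?X \<in> L2k M x0 w l" using Suc.IH sl by simp
    have ul: "u l \<in> L2k M x0 w l" using u sl by auto
    have XF: "?X \<in> borel_measurable (FF l)" and uF: "u l \<in> borel_measurable (FF l)"
      using L2k_FF[OF X] L2k_FF[OF ul] .
    have [measurable]: "?X \<in> borel_measurable (FF (Suc l))" "u l \<in> borel_measurable (FF (Suc l))"
      using FF_mono[OF _ XF] FF_mono[OF _ uF] by auto
    have [measurable]: "w l \<in> borel_measurable (FF (Suc l))" by (rule w_FF)
    have cdF: "(\<lambda>\<omega>. c l *v ?X \<omega> + d l *v u l \<omega>) \<in> borel_measurable (FF l)"
      using XF uF by measurable
    have sqX: "sq ?X" and squ: "sq (u l)" using L2k_sq[OF X] L2k_sq[OF ul] .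
    have s1: "sq (\<lambda>\<omega>. c l *v ?X \<omega> + d l *v u l \<omega>)"
      by (intro sq_add sq_mv sqX squ)
    have s2: "sq (\<lambda>\<omega>. a l *v ?X \<omega> + b l *v u l \<omega>
       + w l \<omega> *\<^sub>R (c l *v ?X \<omega> + d l *v u l \<omega>))"
      by (intro sq_add sq_mv sqX squ sq_wmult[OF cdF s1])
    show ?thesis
      unfolding traj_Suc[OF sl(1)]
      by (rule L2kI[OF _ s2]) measurable
  qed
qed


lemma sq_comp_int: "sq (V :: 'a \<Rightarrow> real^'p) \<Longrightarrow> sq Z \<Longrightarrow> integrable M (\<lambda>\<omega>. V \<omega> $ i * Z \<omega> $ i)"
  by (rule sq_mult[OF sq_comp sq_comp])

lemma cexp_inner_sq:
  fixes Z V :: "'a \<Rightarrow> real^'p"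
  assumes V: "V \<in> borel_measurable (FF j)" "sq V" and Z: "sq Z"
  shows "(\<integral>\<omega>. V \<omega> \<bullet> cexp M (FF j) Z \<omega> \<partial>M) = (\<integral>\<omega>. V \<omega> \<bullet> Z \<omega> \<partial>M)"
  by (rule cexp_inner[OF V(1) sq_meas[OF Z] sq_comp_int[OF V(2) Z]])

lemma cexp_inner_w:
  fixes Z V :: "'a \<Rightarrow> real^'p"
  assumes V: "V \<in> borel_measurable (FF j)" "sq V" and Z: "sq Z"
  shows "(\<integral>\<omega>. V \<omega> \<bullet> cexp M (FF j) (\<lambda>\<eta>. w j \<eta> *\<^sub>R Z \<eta>) \<omega> \<partial>M) = (\<integral>\<omega>. (w j \<omega> *\<^sub>R V \<omega>) \<bullet> Z \<omega> \<partial>M)"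
proof -
  have VF: "V \<in> borel_measurable (FF (Suc j))" using FF_mono[OF _ V(1)] by simp
  have wV: "sq (\<lambda>\<omega>. w j \<omega> *\<^sub>R V \<omega>)" by (rule sq_wmult[OF V])
  have I: "integrable M (\<lambda>\<omega>. V \<omega> $ i * (w j \<omega> *\<^sub>R Z \<omega>) $ i)" for i
    using sq_comp_int[OF wV Z, of i] by (simp add: mult_ac)
  have m: "(\<lambda>\<eta>. w j \<eta> *\<^sub>R Z \<eta>) \<in> borel_measurable M"
    using wm sq_meas[OF Z] by (rule borel_measurable_scaleR)
  have "(\<integral>\<omega>. V \<omega> \<bullet> cexp M (FF j) (\<lambda>\<eta>. w j \<eta> *\<^sub>R Z \<eta>) \<omega> \<partial>M) = (\<integral>\<omega>. V \<omega> \<bullet> (w j \<omega> *\<^sub>R Z \<omega>) \<partial>M)"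
    by (rule cexp_inner[OF V(1) m I])
  then show ?thesis by simp
qed

lemma dual_step:
  fixes Yj Yj1 Zj Zj1 Xj :: "'a \<Rightarrow> real^'n" and a c q :: "real^'n^'n"
  assumes YF: "Yj \<in> borel_measurable (FF j)" and Y: "sq Yj" and Zj: "sq Zj" and Zj1: "sq Zj1" and X: "sq Xj"
    and Y1: "Yj1 = (\<lambda>\<omega>. a *v Yj \<omega> + w j \<omega> *\<^sub>R (c *v Yj \<omega>))"
    and ZE: "AE \<omega> in M. Zj \<omega> = transpose a *v cexp M (FF j) Zj1 \<omega>
              + transpose c *v cexp M (FF j) (\<lambda>\<eta>. w j \<eta> *\<^sub>R Zj1 \<eta>) \<omega> + q *v Xj \<omega>"
  shows "(\<integral>\<omega>. Yj \<omega> \<bullet> Zj \<omega> \<partial>M) = (\<integral>\<omega>. Yj1 \<omega> \<bullet> Zj1 \<omega> \<partial>M) + (\<integral>\<omega>. Yj \<omega> \<bullet> (q *v Xj \<omega>) \<partial>M)"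
proof -
  have aYF: "(\<lambda>\<omega>. a *v Yj \<omega>) \<in> borel_measurable (FF j)" using YF by measurable
  have cYF: "(\<lambda>\<omega>. c *v Yj \<omega>) \<in> borel_measurable (FF j)" using YF by measurable
  have aY: "sq (\<lambda>\<omega>. a *v Yj \<omega>)" and cY: "sq (\<lambda>\<omega>. c *v Yj \<omega>)" using sq_mv[OF Y] by auto
  have wcY: "sq (\<lambda>\<omega>. w j \<omega> *\<^sub>R (c *v Yj \<omega>))" by (rule sq_wmult[OF cYF cY])
  have cZ: "sq (cexp M (FF j) Zj1)" by (rule cexp_sq[OF Zj1])
  have cwZ: "sq (cexp M (FF j) (\<lambda>\<eta>. w j \<eta> *\<^sub>R Zj1 \<eta>))" by (rule cexp_w_sq[OF Zj1])
  have t1: "sq (\<lambda>\<omega>. transpose a *v cexp M (FF j) Zj1 \<omega>)" by (rule sq_mv[OF cZ])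
  have t2: "sq (\<lambda>\<omega>. transpose c *v cexp M (FF j) (\<lambda>\<eta>. w j \<eta> *\<^sub>R Zj1 \<eta>) \<omega>)" by (rule sq_mv[OF cwZ])
  have t3: "sq (\<lambda>\<omega>. q *v Xj \<omega>)" by (rule sq_mv[OF X])
  have i1: "integrable M (\<lambda>\<omega>. Yj \<omega> \<bullet> (transpose a *v cexp M (FF j) Zj1 \<omega>))" by (rule sq_inner[OF Y t1])
  have i2: "integrable M (\<lambda>\<omega>. Yj \<omega> \<bullet> (transpose c *v cexp M (FF j) (\<lambda>\<eta>. w j \<eta> *\<^sub>R Zj1 \<eta>) \<omega>))"
    by (rule sq_inner[OF Y t2])
  have i3: "integrable M (\<lambda>\<omega>. Yj \<omega> \<bullet> (q *v Xj \<omega>))" by (rule sq_inner[OF Y t3])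
  have "(\<integral>\<omega>. Yj \<omega> \<bullet> Zj \<omega> \<partial>M) = (\<integral>\<omega>. Yj \<omega> \<bullet> (transpose a *v cexp M (FF j) Zj1 \<omega>)
        + Yj \<omega> \<bullet> (transpose c *v cexp M (FF j) (\<lambda>\<eta>. w j \<eta> *\<^sub>R Zj1 \<eta>) \<omega>) + Yj \<omega> \<bullet> (q *v Xj \<omega>) \<partial>M)"
  proof (rule integral_cong_AE)
    show "(\<lambda>\<omega>. Yj \<omega> \<bullet> Zj \<omega>) \<in> borel_measurable M"
      using borel_measurable_inner[OF sq_meas[OF Y] sq_meas[OF Zj]] .
    show "(\<lambda>\<omega>. Yj \<omega> \<bullet> (transpose a *v cexp M (FF j) Zj1 \<omega>)
        + Yj \<omega> \<bullet> (transpose c *v cexp M (FF j) (\<lambda>\<eta>. w j \<eta> *\<^sub>R Zj1 \<eta>) \<omega>) + Yj \<omega> \<bullet> (q *v Xj \<omega>)) \<in> borel_measurable M"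
      using i1 i2 i3 by (intro borel_measurable_add borel_measurable_integrable)
    from ZE show "AE \<omega> in M. Yj \<omega> \<bullet> Zj \<omega> = Yj \<omega> \<bullet> (transpose a *v cexp M (FF j) Zj1 \<omega>)
        + Yj \<omega> \<bullet> (transpose c *v cexp M (FF j) (\<lambda>\<eta>. w j \<eta> *\<^sub>R Zj1 \<eta>) \<omega>) + Yj \<omega> \<bullet> (q *v Xj \<omega>)"
      by eventually_elim (simp add: inner_add_right)
  qed
  also have "\<dots> = (\<integral>\<omega>. Yj \<omega> \<bullet> (transpose a *v cexp M (FF j) Zj1 \<omega>) \<partial>M)
        + (\<integral>\<omega>. Yj \<omega> \<bullet> (transpose c *v cexp M (FF j) (\<lambda>\<eta>. w j \<eta> *\<^sub>R Zj1 \<eta>) \<omega>) \<partial>M)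
        + (\<integral>\<omega>. Yj \<omega> \<bullet> (q *v Xj \<omega>) \<partial>M)"
    using i1 i2 i3 by simp
  also have "(\<integral>\<omega>. Yj \<omega> \<bullet> (transpose a *v cexp M (FF j) Zj1 \<omega>) \<partial>M) = (\<integral>\<omega>. (a *v Yj \<omega>) \<bullet> Zj1 \<omega> \<partial>M)"
    unfolding inner_transpose by (rule cexp_inner_sq[OF aYF aY Zj1])
  also have "(\<integral>\<omega>. Yj \<omega> \<bullet> (transpose c *v cexp M (FF j) (\<lambda>\<eta>. w j \<eta> *\<^sub>R Zj1 \<eta>) \<omega>) \<partial>M)
      = (\<integral>\<omega>. (w j \<omega> *\<^sub>R (c *v Yj \<omega>)) \<bullet> Zj1 \<omega> \<partial>M)"
    unfolding inner_transpose by (rule cexp_inner_w[OF cYF cY Zj1])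
  also have "(\<integral>\<omega>. (a *v Yj \<omega>) \<bullet> Zj1 \<omega> \<partial>M) + (\<integral>\<omega>. (w j \<omega> *\<^sub>R (c *v Yj \<omega>)) \<bullet> Zj1 \<omega> \<partial>M)
      = (\<integral>\<omega>. Yj1 \<omega> \<bullet> Zj1 \<omega> \<partial>M)"
  proof -
    have "integrable M (\<lambda>\<omega>. (a *v Yj \<omega>) \<bullet> Zj1 \<omega>)" by (rule sq_inner[OF aY Zj1])
    moreover have "integrable M (\<lambda>\<omega>. (w j \<omega> *\<^sub>R (c *v Yj \<omega>)) \<bullet> Zj1 \<omega>)" by (rule sq_inner[OF wcY Zj1])
    ultimately show ?thesis unfolding Y1 by (simp add: inner_add_left)
  qed
  finally show ?thesis .
qed

lemma dual_first:
  fixes v :: "'a \<Rightarrow> real^'m" and Y1 Z1 :: "'a \<Rightarrow> real^'n" and b d :: "real^'m^'n"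
  assumes vF: "v \<in> borel_measurable (FF k)" and v: "sq v" and Z1: "sq Z1"
    and Y1: "Y1 = (\<lambda>\<omega>. b *v v \<omega> + w k \<omega> *\<^sub>R (d *v v \<omega>))"
  shows "(\<integral>\<omega>. Y1 \<omega> \<bullet> Z1 \<omega> \<partial>M) = (\<integral>\<omega>. v \<omega> \<bullet> (transpose b *v cexp M (FF k) Z1 \<omega>) \<partial>M)
     + (\<integral>\<omega>. v \<omega> \<bullet> (transpose d *v cexp M (FF k) (\<lambda>\<eta>. w k \<eta> *\<^sub>R Z1 \<eta>) \<omega>) \<partial>M)"
proof -
  have bF: "(\<lambda>\<omega>. b *v v \<omega>) \<in> borel_measurable (FF k)" using vF by measurable
  have dF: "(\<lambda>\<omega>. d *v v \<omega>) \<in> borel_measurable (FF k)" using vF by measurable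
  have bv: "sq (\<lambda>\<omega>. b *v v \<omega>)" and dv: "sq (\<lambda>\<omega>. d *v v \<omega>)" using sq_mv[OF v] by auto
  have wdv: "sq (\<lambda>\<omega>. w k \<omega> *\<^sub>R (d *v v \<omega>))" by (rule sq_wmult[OF dF dv])
  have "(\<integral>\<omega>. Y1 \<omega> \<bullet> Z1 \<omega> \<partial>M) = (\<integral>\<omega>. (b *v v \<omega>) \<bullet> Z1 \<omega> \<partial>M) + (\<integral>\<omega>. (w k \<omega> *\<^sub>R (d *v v \<omega>)) \<bullet> Z1 \<omega> \<partial>M)"
  proof -
    have "integrable M (\<lambda>\<omega>. (b *v v \<omega>) \<bullet> Z1 \<omega>)" by (rule sq_inner[OF bv Z1])
    moreover have "integrable M (\<lambda>\<omega>. (w k \<omega> *\<^sub>R (d *v v \<omega>)) \<bullet> Z1 \<omega>)" by (rule sq_inner[OF wdv Z1])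
    ultimately show ?thesis unfolding Y1 by (simp add: inner_add_left)
  qed
  also have "(\<integral>\<omega>. (b *v v \<omega>) \<bullet> Z1 \<omega> \<partial>M) = (\<integral>\<omega>. v \<omega> \<bullet> (transpose b *v cexp M (FF k) Z1 \<omega>) \<partial>M)"
    unfolding inner_transpose by (rule cexp_inner_sq[OF bF bv Z1, symmetric])
  also have "(\<integral>\<omega>. (w k \<omega> *\<^sub>R (d *v v \<omega>)) \<bullet> Z1 \<omega> \<partial>M)
      = (\<integral>\<omega>. v \<omega> \<bullet> (transpose d *v cexp M (FF k) (\<lambda>\<eta>. w k \<eta> *\<^sub>R Z1 \<eta>) \<omega>) \<partial>M)"
    unfolding inner_transpose by (rule cexp_inner_w[OF dF dv Z1, symmetric])
  finally show ?thesis .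
qed


lemma L2k_zero: "(\<lambda>\<omega>. 0) \<in> L2k M x0 w j"
  by (rule L2kI[OF _ sq_0]) simp

context
  fixes A C :: "nat \<Rightarrow> nat \<Rightarrow> real^'n^'n" and B D :: "nat \<Rightarrow> nat \<Rightarrow> real^'m^'n"
    and Q :: "nat \<Rightarrow> nat \<Rightarrow> real^'n^'n" and R :: "nat \<Rightarrow> nat \<Rightarrow> real^'m^'m" and G :: "nat \<Rightarrow> real^'n^'n"
    and N k :: nat and y :: "'a \<Rightarrow> real^'n" and u :: "nat \<Rightarrow> 'a \<Rightarrow> real^'m"
    and v :: "'a \<Rightarrow> real^'m" and Z :: "nat \<Rightarrow> 'a \<Rightarrow> real^'n"
  assumes kN: "k < N"
    and Qs: "\<And>l. k \<le> l \<Longrightarrow> l < N \<Longrightarrow> transpose (Q k l) = Q k l"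
    and Rs: "\<And>l. k \<le> l \<Longrightarrow> l < N \<Longrightarrow> transpose (R k l) = R k l"
    and Gs: "transpose (G k) = G k"
    and yL: "y \<in> L2k M x0 w k"
    and uL: "\<forall>l\<in>{k..<N}. u l \<in> L2k M x0 w l"
    and vL: "v \<in> L2k M x0 w k"
    and Zsq: "\<forall>l\<in>{k..N}. sq (Z l)"
    and ZE: "\<forall>l\<in>{k..<N}. AE \<omega> in M. Z l \<omega> =
                 transpose (A k l) *v cexp M (FF l) (Z (Suc l)) \<omega>
               + transpose (C k l) *v cexp M (FF l) (\<lambda>\<eta>. w l \<eta> *\<^sub>R Z (Suc l) \<eta>) \<omega>
               + Q k l *v traj (A k) (B k) (C k) (D k) w k y u l \<omega>"
    and ZN: "AE \<omega> in M. Z N \<omega> = G k *v traj (A k) (B k) (C k) (D k) w k y u N \<omega>"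
begin

abbreviation "dl \<equiv> (\<lambda>l. if l = k then v else (\<lambda>\<omega>. 0))"
abbreviation "YY \<equiv> traj (A k) (B k) (C k) (D k) w k (\<lambda>\<omega>. 0) dl"
abbreviation "XX \<equiv> traj (A k) (B k) (C k) (D k) w k y u"

lemma dl_L2: "\<forall>l\<in>{k..<N}. dl l \<in> L2k M x0 w l"
  using vL L2k_zero by auto

lemma YY_L2: "k \<le> l \<Longrightarrow> l \<le> N \<Longrightarrow> YY l \<in> L2k M x0 w l"
  by (rule traj_L2[OF L2k_zero dl_L2])

lemma XX_L2: "k \<le> l \<Longrightarrow> l \<le> N \<Longrightarrow> XX l \<in> L2k M x0 w l"
  by (rule traj_L2[OF yL uL])

lemma YY_k: "YY k = (\<lambda>\<omega>. 0)" by simp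

lemma YY_Suc_k: "YY (Suc k) = (\<lambda>\<omega>. B k k *v v \<omega> + w k \<omega> *\<^sub>R (D k k *v v \<omega>))"
  by (simp add: traj_Suc)

lemma YY_Suc: "k < l \<Longrightarrow> YY (Suc l) = (\<lambda>\<omega>. A k l *v YY l \<omega> + w l \<omega> *\<^sub>R (C k l *v YY l \<omega>))"
  by (simp add: traj_Suc)

lemma tele:
  "Suc k \<le> j \<Longrightarrow> j \<le> N \<Longrightarrow> (\<integral>\<omega>. YY (Suc k) \<omega> \<bullet> Z (Suc k) \<omega> \<partial>M)
     = (\<Sum>l=Suc k..<j. (\<integral>\<omega>. YY l \<omega> \<bullet> (Q k l *v XX l \<omega>) \<partial>M)) + (\<integral>\<omega>. YY j \<omega> \<bullet> Z j \<omega> \<partial>M)"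
proof (induction j)
  case 0
  then show ?case by simp
next
  case (Suc j)
  show ?case
  proof (cases "Suc j = Suc k")
    case True
    then show ?thesis by simp
  next
    case False
    then have j: "Suc k \<le> j" "j < N" using Suc.prems by auto
    have IH: "(\<integral>\<omega>. YY (Suc k) \<omega> \<bullet> Z (Suc k) \<omega> \<partial>M)
     = (\<Sum>l=Suc k..<j. (\<integral>\<omega>. YY l \<omega> \<bullet> (Q k l *v XX l \<omega>) \<partial>M)) + (\<integral>\<omega>. YY j \<omega> \<bullet> Z j \<omega> \<partial>M)"
      using Suc.IH j by simp
    have Yj: "YY j \<in> L2k M x0 w j" using YY_L2 j by simp
    have Xj: "XX j \<in> L2k M x0 w j" using XX_L2 j by simp
    have step: "(\<integral>\<omega>. YY j \<omega> \<bullet> Z j \<omega> \<partial>M) = (\<integral>\<omega>. YY (Suc j) \<omega> \<bullet> Z (Suc j) \<omega> \<partial>M)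
        + (\<integral>\<omega>. YY j \<omega> \<bullet> (Q k j *v XX j \<omega>) \<partial>M)"
    proof (rule dual_step[OF L2k_FF[OF Yj] L2k_sq[OF Yj] _ _ L2k_sq[OF Xj]])
      show "sq (Z j)" "sq (Z (Suc j))" using Zsq j by auto
      show "YY (Suc j) = (\<lambda>\<omega>. A k j *v YY j \<omega> + w j \<omega> *\<^sub>R (C k j *v YY j \<omega>))"
        using YY_Suc j by simp
      show "AE \<omega> in M. Z j \<omega> = transpose (A k j) *v cexp M (FF j) (Z (Suc j)) \<omega> +
        transpose (C k j) *v cexp M (FF j) (\<lambda>\<eta>. w j \<eta> *\<^sub>R Z (Suc j) \<eta>) \<omega> + Q k j *v XX j \<omega>"
        using ZE j by simp
    qed
    have "(\<Sum>l=Suc k..<Suc j. (\<integral>\<omega>. YY l \<omega> \<bullet> (Q k l *v XX l \<omega>) \<partial>M))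
        = (\<Sum>l=Suc k..<j. (\<integral>\<omega>. YY l \<omega> \<bullet> (Q k l *v XX l \<omega>) \<partial>M)) + (\<integral>\<omega>. YY j \<omega> \<bullet> (Q k j *v XX j \<omega>) \<partial>M)"
      using j by simp
    then show ?thesis using IH step by simp
  qed
qed


lemma expand:
  "Jcost M A B C D Q R G w N k y (u(k := (\<lambda>\<omega>. u k \<omega> + v \<omega>)))
   = Jcost M A B C D Q R G w N k y u + 2 * (\<integral>\<omega>. v \<omega> \<bullet> lam M x0 w B D R k u Z \<omega> \<partial>M)
     + cvx M A B C D Q R G w N k v"
proof -
  define u' where "u' = u(k := (\<lambda>\<omega>. u k \<omega> + v \<omega>))"
  define Xp where "Xp = traj (A k) (B k) (C k) (D k) w k y u'"
  have u'eq: "u' = (\<lambda>l \<omega>. u l \<omega> + dl l \<omega>)" by (auto simp: u'_def fun_eq_iff)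
  have Xp: "Xp l \<omega> = XX l \<omega> + YY l \<omega>" for l \<omega>
    using traj_add[of "A k" "B k" "C k" "D k" w k y "\<lambda>\<omega>. 0" u dl l \<omega>]
    unfolding Xp_def u'eq by simp
  have sX: "sq (XX l)" if "k \<le> l" "l \<le> N" for l using L2k_sq[OF XX_L2[OF that]] .
  have sY: "sq (YY l)" if "k \<le> l" "l \<le> N" for l using L2k_sq[OF YY_L2[OF that]] .
  have su: "sq (u l)" if "k \<le> l" "l < N" for l using uL that by (intro L2k_sq) auto
  have sv: "sq v" using L2k_sq[OF vL] .
  have sd: "sq (dl l)" for l using sv sq_0 by auto
  define aa where "aa l \<omega> = XX l \<omega> \<bullet> (Q k l *v XX l \<omega>) + u l \<omega> \<bullet> (R k l *v u l \<omega>)" for l \<omega>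
  define bb where "bb l \<omega> = YY l \<omega> \<bullet> (Q k l *v XX l \<omega>) + dl l \<omega> \<bullet> (R k l *v u l \<omega>)" for l \<omega>
  define cc where "cc l \<omega> = YY l \<omega> \<bullet> (Q k l *v YY l \<omega>) + dl l \<omega> \<bullet> (R k l *v dl l \<omega>)" for l \<omega>
  have pw: "Xp l \<omega> \<bullet> (Q k l *v Xp l \<omega>) + u' l \<omega> \<bullet> (R k l *v u' l \<omega>) = aa l \<omega> + 2 * bb l \<omega> + cc l \<omega>"
    if "k \<le> l" "l < N" for l \<omega>
    unfolding Xp u'eq aa_def bb_def cc_def
    using quad_expand[OF Qs[OF that], of "XX l \<omega>" "YY l \<omega>"] quad_expand[OF Rs[OF that], of "u l \<omega>" "dl l \<omega>"]
    by (simp add: algebra_simps)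
  have ia: "integrable M (aa l)" if "k \<le> l" "l < N" for l
    unfolding aa_def using that
    by (intro Bochner_Integration.integrable_add sq_inner sq_mv sX su) auto
  have ib: "integrable M (bb l)" if "k \<le> l" "l < N" for l
    unfolding bb_def using that
    by (intro Bochner_Integration.integrable_add sq_inner sq_mv sX sY su sd) auto
  have ic: "integrable M (cc l)" if "k \<le> l" "l < N" for l
    unfolding cc_def using that
    by (intro Bochner_Integration.integrable_add sq_inner sq_mv sY sd) auto
  have int_eq: "(\<integral>\<omega>. Xp l \<omega> \<bullet> (Q k l *v Xp l \<omega>) + u' l \<omega> \<bullet> (R k l *v u' l \<omega>) \<partial>M)
      = integral\<^sup>L M (aa l) + 2 * integral\<^sup>L M (bb l) + integral\<^sup>L M (cc l)"
    if "k \<le> l" "l < N" for l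
  proof -
    have "(\<integral>\<omega>. Xp l \<omega> \<bullet> (Q k l *v Xp l \<omega>) + u' l \<omega> \<bullet> (R k l *v u' l \<omega>) \<partial>M)
        = (\<integral>\<omega>. aa l \<omega> + 2 * bb l \<omega> + cc l \<omega> \<partial>M)"
      using pw[OF that] by simp
    also have "\<dots> = integral\<^sup>L M (aa l) + 2 * integral\<^sup>L M (bb l) + integral\<^sup>L M (cc l)"
      using ia[OF that] ib[OF that] ic[OF that] by simp
    finally show ?thesis .
  qed
  have sumeq: "(\<Sum>l=k..<N. (\<integral>\<omega>. Xp l \<omega> \<bullet> (Q k l *v Xp l \<omega>) + u' l \<omega> \<bullet> (R k l *v u' l \<omega>) \<partial>M))
      = (\<Sum>l=k..<N. integral\<^sup>L M (aa l)) + 2 * (\<Sum>l=k..<N. integral\<^sup>L M (bb l)) + (\<Sum>l=k..<N. integral\<^sup>L M (cc l))"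
  proof -
    have "(\<Sum>l=k..<N. (\<integral>\<omega>. Xp l \<omega> \<bullet> (Q k l *v Xp l \<omega>) + u' l \<omega> \<bullet> (R k l *v u' l \<omega>) \<partial>M))
        = (\<Sum>l=k..<N. integral\<^sup>L M (aa l) + 2 * integral\<^sup>L M (bb l) + integral\<^sup>L M (cc l))"
      by (rule sum.cong) (auto simp: int_eq)
    then show ?thesis by (simp add: sum.distrib sum_distrib_left)
  qed
  have sXN: "sq (XX N)" and sYN: "sq (YY N)" using sX sY kN by auto
  have termeq: "(\<integral>\<omega>. Xp N \<omega> \<bullet> (G k *v Xp N \<omega>) \<partial>M)
      = (\<integral>\<omega>. XX N \<omega> \<bullet> (G k *v XX N \<omega>) \<partial>M) + 2 * (\<integral>\<omega>. YY N \<omega> \<bullet> (G k *v XX N \<omega>) \<partial>M)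
        + (\<integral>\<omega>. YY N \<omega> \<bullet> (G k *v YY N \<omega>) \<partial>M)"
  proof -
    have i1: "integrable M (\<lambda>\<omega>. XX N \<omega> \<bullet> (G k *v XX N \<omega>))" by (intro sq_inner sq_mv sXN)
    have i2: "integrable M (\<lambda>\<omega>. YY N \<omega> \<bullet> (G k *v XX N \<omega>))" by (intro sq_inner sq_mv sXN sYN)
    have i3: "integrable M (\<lambda>\<omega>. YY N \<omega> \<bullet> (G k *v YY N \<omega>))" by (intro sq_inner sq_mv sYN)
    have "(\<integral>\<omega>. Xp N \<omega> \<bullet> (G k *v Xp N \<omega>) \<partial>M)
        = (\<integral>\<omega>. XX N \<omega> \<bullet> (G k *v XX N \<omega>) + 2 * (YY N \<omega> \<bullet> (G k *v XX N \<omega>)) + YY N \<omega> \<bullet> (G k *v YY N \<omega>) \<partial>M)"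
      unfolding Xp quad_expand[OF Gs] ..
    also have "\<dots> = (\<integral>\<omega>. XX N \<omega> \<bullet> (G k *v XX N \<omega>) \<partial>M) + 2 * (\<integral>\<omega>. YY N \<omega> \<bullet> (G k *v XX N \<omega>) \<partial>M)
        + (\<integral>\<omega>. YY N \<omega> \<bullet> (G k *v YY N \<omega>) \<partial>M)"
      using i1 i2 i3 by simp
    finally show ?thesis .
  qed
  have Ju: "Jcost M A B C D Q R G w N k y u = (\<Sum>l=k..<N. integral\<^sup>L M (aa l)) + (\<integral>\<omega>. XX N \<omega> \<bullet> (G k *v XX N \<omega>) \<partial>M)"
    unfolding Jcost_def Let_def aa_def ..
  have Ju': "Jcost M A B C D Q R G w N k y u' =
     (\<Sum>l=k..<N. (\<integral>\<omega>. Xp l \<omega> \<bullet> (Q k l *v Xp l \<omega>) + u' l \<omega> \<bullet> (R k l *v u' l \<omega>) \<partial>M))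
     + (\<integral>\<omega>. Xp N \<omega> \<bullet> (G k *v Xp N \<omega>) \<partial>M)"
    unfolding Jcost_def Let_def Xp_def ..
  have ccsplit: "integral\<^sup>L M (cc l) = (\<integral>\<omega>. YY l \<omega> \<bullet> (Q k l *v YY l \<omega>) \<partial>M) + (\<integral>\<omega>. dl l \<omega> \<bullet> (R k l *v dl l \<omega>) \<partial>M)"
    if "k \<le> l" "l < N" for l
  proof -
    have "integrable M (\<lambda>\<omega>. YY l \<omega> \<bullet> (Q k l *v YY l \<omega>))" using that by (intro sq_inner sq_mv sY) auto
    moreover have "integrable M (\<lambda>\<omega>. dl l \<omega> \<bullet> (R k l *v dl l \<omega>))" by (intro sq_inner sq_mv sd)
    ultimately show ?thesis unfolding cc_def by simp
  qed
  have dsum: "(\<Sum>l=k..<N. (\<integral>\<omega>. dl l \<omega> \<bullet> (R k l *v dl l \<omega>) \<partial>M)) = (\<integral>\<omega>. v \<omega> \<bullet> (R k k *v v \<omega>) \<partial>M)"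
  proof -
    have "(\<Sum>l=k..<N. (\<integral>\<omega>. dl l \<omega> \<bullet> (R k l *v dl l \<omega>) \<partial>M))
        = (\<integral>\<omega>. dl k \<omega> \<bullet> (R k k *v dl k \<omega>) \<partial>M) + (\<Sum>l=Suc k..<N. (\<integral>\<omega>. dl l \<omega> \<bullet> (R k l *v dl l \<omega>) \<partial>M))"
      using kN by (simp add: sum.atLeast_Suc_lessThan)
    also have "(\<Sum>l=Suc k..<N. (\<integral>\<omega>. dl l \<omega> \<bullet> (R k l *v dl l \<omega>) \<partial>M)) = 0"
      by (rule sum.neutral) auto
    finally show ?thesis by simp
  qed
  have quad: "(\<Sum>l=k..<N. integral\<^sup>L M (cc l)) + (\<integral>\<omega>. YY N \<omega> \<bullet> (G k *v YY N \<omega>) \<partial>M) = cvx M A B C D Q R G w N k v"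
  proof -
    have "(\<Sum>l=k..<N. integral\<^sup>L M (cc l)) = (\<Sum>l=k..<N. (\<integral>\<omega>. YY l \<omega> \<bullet> (Q k l *v YY l \<omega>) \<partial>M))
        + (\<Sum>l=k..<N. (\<integral>\<omega>. dl l \<omega> \<bullet> (R k l *v dl l \<omega>) \<partial>M))"
      by (simp add: ccsplit sum.distrib[symmetric])
    then show ?thesis unfolding cvx_def Let_def dsum by simp
  qed
  have bsplit: "(\<Sum>l=k..<N. integral\<^sup>L M (bb l)) = (\<integral>\<omega>. v \<omega> \<bullet> (R k k *v u k \<omega>) \<partial>M)
      + (\<Sum>l=Suc k..<N. (\<integral>\<omega>. YY l \<omega> \<bullet> (Q k l *v XX l \<omega>) \<partial>M))"
  proof -
    have "(\<Sum>l=k..<N. integral\<^sup>L M (bb l)) = integral\<^sup>L M (bb k) + (\<Sum>l=Suc k..<N. integral\<^sup>L M (bb l))"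
      using kN by (simp add: sum.atLeast_Suc_lessThan)
    moreover have "integral\<^sup>L M (bb k) = (\<integral>\<omega>. v \<omega> \<bullet> (R k k *v u k \<omega>) \<partial>M)"
      unfolding bb_def by simp
    moreover have "(\<Sum>l=Suc k..<N. integral\<^sup>L M (bb l)) = (\<Sum>l=Suc k..<N. (\<integral>\<omega>. YY l \<omega> \<bullet> (Q k l *v XX l \<omega>) \<partial>M))"
      by (rule sum.cong) (auto simp: bb_def[abs_def])
    ultimately show ?thesis by simp
  qed
  have YZN: "(\<integral>\<omega>. YY N \<omega> \<bullet> Z N \<omega> \<partial>M) = (\<integral>\<omega>. YY N \<omega> \<bullet> (G k *v XX N \<omega>) \<partial>M)"
  proof (rule integral_cong_AE)
    show "(\<lambda>\<omega>. YY N \<omega> \<bullet> Z N \<omega>) \<in> borel_measurable M"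
      using sq_meas[OF sYN] sq_meas[of "Z N"] Zsq kN by (intro borel_measurable_inner) auto
    show "(\<lambda>\<omega>. YY N \<omega> \<bullet> (G k *v XX N \<omega>)) \<in> borel_measurable M"
      using sq_meas[OF sYN] sq_meas[OF sXN] by (intro borel_measurable_inner borel_measurable_mv) auto
    from ZN show "AE \<omega> in M. YY N \<omega> \<bullet> Z N \<omega> = YY N \<omega> \<bullet> (G k *v XX N \<omega>)"
      by eventually_elim simp
  qed
  have tN: "(\<integral>\<omega>. YY (Suc k) \<omega> \<bullet> Z (Suc k) \<omega> \<partial>M)
     = (\<Sum>l=Suc k..<N. (\<integral>\<omega>. YY l \<omega> \<bullet> (Q k l *v XX l \<omega>) \<partial>M)) + (\<integral>\<omega>. YY N \<omega> \<bullet> Z N \<omega> \<partial>M)"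
    using tele[of N] kN by simp
  have sZ1: "sq (Z (Suc k))" using Zsq kN by auto
  have df: "(\<integral>\<omega>. YY (Suc k) \<omega> \<bullet> Z (Suc k) \<omega> \<partial>M)
      = (\<integral>\<omega>. v \<omega> \<bullet> (transpose (B k k) *v cexp M (FF k) (Z (Suc k)) \<omega>) \<partial>M)
     + (\<integral>\<omega>. v \<omega> \<bullet> (transpose (D k k) *v cexp M (FF k) (\<lambda>\<eta>. w k \<eta> *\<^sub>R Z (Suc k) \<eta>) \<omega>) \<partial>M)"
    by (rule dual_first[OF L2k_FF[OF vL] sv sZ1 YY_Suc_k])
  have lamsplit: "(\<integral>\<omega>. v \<omega> \<bullet> lam M x0 w B D R k u Z \<omega> \<partial>M)
      = (\<integral>\<omega>. v \<omega> \<bullet> (R k k *v u k \<omega>) \<partial>M)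
      + (\<integral>\<omega>. v \<omega> \<bullet> (transpose (B k k) *v cexp M (FF k) (Z (Suc k)) \<omega>) \<partial>M)
      + (\<integral>\<omega>. v \<omega> \<bullet> (transpose (D k k) *v cexp M (FF k) (\<lambda>\<eta>. w k \<eta> *\<^sub>R Z (Suc k) \<eta>) \<omega>) \<partial>M)"
  proof -
    have i1: "integrable M (\<lambda>\<omega>. v \<omega> \<bullet> (R k k *v u k \<omega>))" using kN by (intro sq_inner sq_mv sv su) auto
    have i2: "integrable M (\<lambda>\<omega>. v \<omega> \<bullet> (transpose (B k k) *v cexp M (FF k) (Z (Suc k)) \<omega>))"
      by (intro sq_inner sq_mv sv cexp_sq sZ1)
    have i3: "integrable M (\<lambda>\<omega>. v \<omega> \<bullet> (transpose (D k k) *v cexp M (FF k) (\<lambda>\<eta>. w k \<eta> *\<^sub>R Z (Suc k) \<eta>) \<omega>))"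
      by (intro sq_inner sq_mv sv cexp_w_sq sZ1)
    show ?thesis unfolding lam_def inner_add_right using i1 i2 i3 by simp
  qed
  have cross: "(\<Sum>l=k..<N. integral\<^sup>L M (bb l)) + (\<integral>\<omega>. YY N \<omega> \<bullet> (G k *v XX N \<omega>) \<partial>M)
      = (\<integral>\<omega>. v \<omega> \<bullet> lam M x0 w B D R k u Z \<omega> \<partial>M)"
    using bsplit YZN tN df lamsplit by simp
  show ?thesis
    unfolding u'_def[symmetric] Ju' sumeq termeq Ju quad[symmetric] cross[symmetric]
    by (simp add: algebra_simps)
qed

end


lemma zrec_sq:
  assumes kN: "k \<le> N" and X: "\<forall>l\<in>{k..N}. sq (X l)"
  shows "i \<le> N - k \<Longrightarrow> sq (zrec M x0 w A C Q G N k X i)"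
proof (induction i)
  case 0
  then show ?case using X kN by (simp add: sq_mv)
next
  case (Suc i)
  then have IH: "sq (zrec M x0 w A C Q G N k X i)" by simp
  have Xl: "sq (X (N - Suc i))" using X Suc.prems by auto
  show ?case
    unfolding zrec.simps
    by (intro sq_add sq_mv cexp_sq cexp_w_sq IH Xl)
qed

lemma zz_sq:
  assumes kN: "k \<le> N" and X: "\<forall>l\<in>{k..N}. sq (X l)"
  shows "\<forall>l\<in>{k..N}. sq (zz M x0 w A C Q G N k X l)"
  unfolding zz_def
proof (intro ballI)
  fix l assume l: "l \<in> {k..N}"
  show "sq (zrec M x0 w A C Q G N k X (N - l))" by (rule zrec_sq[OF kN X]) (use l in auto)
qed

lemma eqstate_L2:
  fixes A C :: "nat \<Rightarrow> nat \<Rightarrow> real^'n^'n" and B D :: "nat \<Rightarrow> nat \<Rightarrow> real^'m^'n"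
    and x :: "'a \<Rightarrow> real^'n"
  assumes x: "x \<in> L2k M x0 w t" and uP: "u \<in> L2proc M x0 w N t" and k: "t \<le> k" "k \<le> N"
  shows "eqstate A B C D w t x u k \<in> L2k M x0 w k"
  unfolding eqstate_def
  by (rule traj_L2[OF x]) (use uP k in \<open>auto simp: L2proc_def\<close>)

lemma ii_to_i:
  fixes A C :: "nat \<Rightarrow> nat \<Rightarrow> real^'n^'n" and B D :: "nat \<Rightarrow> nat \<Rightarrow> real^'m^'n"
    and Q :: "nat \<Rightarrow> nat \<Rightarrow> real^'n^'n" and R :: "nat \<Rightarrow> nat \<Rightarrow> real^'m^'m" and G :: "nat \<Rightarrow> real^'n^'n"
    and N t :: nat and x :: "'a \<Rightarrow> real^'n"
  assumes Qs: "\<And>s k. s < N \<Longrightarrow> s \<le> k \<Longrightarrow> k < N \<Longrightarrow> transpose (Q s k) = Q s k"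
    and Rs: "\<And>s k. s < N \<Longrightarrow> s \<le> k \<Longrightarrow> k < N \<Longrightarrow> transpose (R s k) = R s k"
    and Gs: "\<And>s. s < N \<Longrightarrow> transpose (G s) = G s"
    and xL: "x \<in> L2k M x0 w t"
    and ci: "cond_ii M x0 A B C D Q R G w N t x u"
  shows "open_loop_equilibrium M x0 A B C D Q R G w N t x u"
proof -
  from ci have uP: "u \<in> L2proc M x0 w N t" by (simp add: cond_ii_def)
  show ?thesis unfolding open_loop_equilibrium_def
  proof (intro conjI ballI uP)
    fix k and ubar :: "'a \<Rightarrow> real^'m" assume k: "k \<in> {t..<N}" and ub: "ubar \<in> L2k M x0 w k"
    have kN: "k < N" using k by simp
    have yL: "eqstate A B C D w t x u k \<in> L2k M x0 w k"
      using eqstate_L2[OF xL uP] k by simp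
    have uL: "\<forall>l\<in>{k..<N}. u l \<in> L2k M x0 w l" using uP k by (auto simp: L2proc_def)
    have Qk: "\<And>l. k \<le> l \<Longrightarrow> l < N \<Longrightarrow> transpose (Q k l) = Q k l" using Qs kN by blast
    have Rk: "\<And>l. k \<le> l \<Longrightarrow> l < N \<Longrightarrow> transpose (R k l) = R k l" using Rs kN by blast
    have Gk: "transpose (G k) = G k" using Gs kN by blast
    from ci k obtain Z where
      Zm: "\<forall>l\<in>{k..N}. Z l \<in> borel_measurable M \<and> integrable M (\<lambda>\<omega>. (norm (Z l \<omega>))\<^sup>2)"
      and ZE: "\<forall>l\<in>{k..<N}. AE \<omega> in M. Z l \<omega> =
                 transpose (A k l) *v cexp M (FF l) (Z (Suc l)) \<omega>
               + transpose (C k l) *v cexp M (FF l) (\<lambda>\<eta>. w l \<eta> *\<^sub>R Z (Suc l) \<eta>) \<omega>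
               + Q k l *v traj (A k) (B k) (C k) (D k) w k (eqstate A B C D w t x u k) u l \<omega>"
      and ZN: "AE \<omega> in M. Z N \<omega> = G k *v traj (A k) (B k) (C k) (D k) w k (eqstate A B C D w t x u k) u N \<omega>"
      and ZS: "AE \<omega> in M. 0 = R k k *v u k \<omega>
               + transpose (B k k) *v cexp M (FF k) (Z (Suc k)) \<omega>
               + transpose (D k k) *v cexp M (FF k) (\<lambda>\<eta>. w k \<eta> *\<^sub>R Z (Suc k) \<eta>) \<omega>"
      and INF: "(INF ubar\<in>L2k M x0 w k. ereal (cvx M A B C D Q R G w N k ubar)) \<ge> 0"
      unfolding cond_ii_def cvx_def Let_def by blast
    have Zsq: "\<forall>l\<in>{k..N}. sq (Z l)" using Zm by (simp add: sq_def)
    define v where "v = (\<lambda>\<omega>. ubar \<omega> - u k \<omega>)"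
    have ukL: "u k \<in> L2k M x0 w k" using uL kN by simp
    have vL: "v \<in> L2k M x0 w k"
    proof (rule L2kI)
      show "v \<in> borel_measurable (FF k)" unfolding v_def
        using L2k_FF[OF ub] L2k_FF[OF ukL] by (rule borel_measurable_diff)
      show "sq v" unfolding v_def by (rule sq_diff[OF L2k_sq[OF ub] L2k_sq[OF ukL]])
    qed
    note E = expand[where A=A and B=B and C=C and D=D and Q=Q and R=R and G=G and N=N and k=k
      and y="eqstate A B C D w t x u k" and u=u and v=v and Z=Z, OF kN Qk Rk Gk yL uL vL Zsq ZE ZN]
    have u'': "u(k := (\<lambda>\<omega>. u k \<omega> + v \<omega>)) = u(k := ubar)" by (simp add: v_def)
    have lam0: "(\<integral>\<omega>. v \<omega> \<bullet> lam M x0 w B D R k u Z \<omega> \<partial>M) = 0"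
      by (rule integral_eq_zero_AE) (use ZS in \<open>eventually_elim, simp add: lam_def\<close>)
    have "(INF ubar\<in>L2k M x0 w k. ereal (cvx M A B C D Q R G w N k ubar)) \<le> ereal (cvx M A B C D Q R G w N k v)"
      by (rule INF_lower[OF vL])
    from order_trans[OF INF this] have "0 \<le> ereal (cvx M A B C D Q R G w N k v)" .
    then have cv: "0 \<le> cvx M A B C D Q R G w N k v" by simp
    show "Jcost M A B C D Q R G w N k (eqstate A B C D w t x u k) u
          \<le> Jcost M A B C D Q R G w N k (eqstate A B C D w t x u k) (u(k := ubar))"
      using E u'' lam0 cv by simp
  qed
qed

lemma i_to_ii:
  fixes A C :: "nat \<Rightarrow> nat \<Rightarrow> real^'n^'n" and B D :: "nat \<Rightarrow> nat \<Rightarrow> real^'m^'n"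
    and Q :: "nat \<Rightarrow> nat \<Rightarrow> real^'n^'n" and R :: "nat \<Rightarrow> nat \<Rightarrow> real^'m^'m" and G :: "nat \<Rightarrow> real^'n^'n"
    and N t :: nat and x :: "'a \<Rightarrow> real^'n"
  assumes Qs: "\<And>s k. s < N \<Longrightarrow> s \<le> k \<Longrightarrow> k < N \<Longrightarrow> transpose (Q s k) = Q s k"
    and Rs: "\<And>s k. s < N \<Longrightarrow> s \<le> k \<Longrightarrow> k < N \<Longrightarrow> transpose (R s k) = R s k"
    and Gs: "\<And>s. s < N \<Longrightarrow> transpose (G s) = G s"
    and xL: "x \<in> L2k M x0 w t"
    and ol: "open_loop_equilibrium M x0 A B C D Q R G w N t x u"
  shows "cond_ii M x0 A B C D Q R G w N t x u"
proof -
  from ol have uP: "u \<in> L2proc M x0 w N t" by (simp add: open_loop_equilibrium_def)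
  have OL: "\<And>k ubar. k \<in> {t..<N} \<Longrightarrow> ubar \<in> L2k M x0 w k \<Longrightarrow>
        Jcost M A B C D Q R G w N k (eqstate A B C D w t x u k) u
          \<le> Jcost M A B C D Q R G w N k (eqstate A B C D w t x u k) (u(k := ubar))"
    using ol by (simp add: open_loop_equilibrium_def)
  show ?thesis unfolding cond_ii_def
  proof (intro conjI ballI uP)
    fix k assume k: "k \<in> {t..<N}"
    have kN: "k < N" using k by simp
    define y where "y = eqstate A B C D w t x u k"
    have yL: "y \<in> L2k M x0 w k"
      using eqstate_L2[OF xL uP] k unfolding y_def by simp
    have uL: "\<forall>l\<in>{k..<N}. u l \<in> L2k M x0 w l" using uP k by (auto simp: L2proc_def)
    have Qk: "\<And>l. k \<le> l \<Longrightarrow> l < N \<Longrightarrow> transpose (Q k l) = Q k l" using Qs kN by blast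
    have Rk: "\<And>l. k \<le> l \<Longrightarrow> l < N \<Longrightarrow> transpose (R k l) = R k l" using Rs kN by blast
    have Gk: "transpose (G k) = G k" using Gs kN by blast
    define X where "X = traj (A k) (B k) (C k) (D k) w k y u"
    have Xsq: "\<forall>l\<in>{k..N}. sq (X l)"
    proof (intro ballI)
      fix l assume "l \<in> {k..N}"
      then have "X l \<in> L2k M x0 w l" unfolding X_def by (intro traj_L2[OF yL uL]) auto
      then show "sq (X l)" by (rule L2k_sq)
    qed
    define Z where "Z = zz M x0 w A C Q G N k X"
    have Zsq: "\<forall>l\<in>{k..N}. sq (Z l)" unfolding Z_def by (rule zz_sq[OF _ Xsq]) (use kN in simp)
    have ZE: "\<forall>l\<in>{k..<N}. AE \<omega> in M. Z l \<omega> =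
                 transpose (A k l) *v cexp M (FF l) (Z (Suc l)) \<omega>
               + transpose (C k l) *v cexp M (FF l) (\<lambda>\<eta>. w l \<eta> *\<^sub>R Z (Suc l) \<eta>) \<omega>
               + Q k l *v traj (A k) (B k) (C k) (D k) w k y u l \<omega>"
      unfolding Z_def X_def[symmetric]
    proof (intro ballI AE_I2)
      fix l \<omega> assume l: "l \<in> {k..<N}"
      show "zz M x0 w A C Q G N k X l \<omega> =
        transpose (A k l) *v cexp M (FF l) (zz M x0 w A C Q G N k X (Suc l)) \<omega> +
        transpose (C k l) *v cexp M (FF l) (\<lambda>\<eta>. w l \<eta> *\<^sub>R zz M x0 w A C Q G N k X (Suc l) \<eta>) \<omega> +
        Q k l *v X l \<omega>"
        using zz_step[of l N M x0 w A C Q G k X] l by simp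
    qed
    have ZN: "AE \<omega> in M. Z N \<omega> = G k *v traj (A k) (B k) (C k) (D k) w k y u N \<omega>"
      unfolding Z_def X_def[symmetric] zz_N by simp
    have ukL: "u k \<in> L2k M x0 w k" using uL kN by simp
    have sZ1: "sq (Z (Suc k))" using Zsq kN by simp
    define \<Lambda> where "\<Lambda> = lam M x0 w B D R k u Z"
    have LL: "\<Lambda> \<in> L2k M x0 w k"
    proof (rule L2kI)
      have [measurable]: "u k \<in> borel_measurable (FF k)" by (rule L2k_FF[OF ukL])
      have [measurable]: "cexp M (FF k) (Z (Suc k)) \<in> borel_measurable (FF k)" by (rule cexp_FF)
      have [measurable]: "cexp M (FF k) (\<lambda>\<eta>. w k \<eta> *\<^sub>R Z (Suc k) \<eta>) \<in> borel_measurable (FF k)" by (rule cexp_FF)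
      show "\<Lambda> \<in> borel_measurable (FF k)" unfolding \<Lambda>_def lam_def by measurable
      show "sq \<Lambda>" unfolding \<Lambda>_def lam_def
        by (intro sq_add sq_mv cexp_sq cexp_w_sq sZ1 L2k_sq[OF ukL])
    qed
    have key: "0 \<le> cvx M A B C D Q R G w N k v \<and> (\<integral>\<omega>. v \<omega> \<bullet> \<Lambda> \<omega> \<partial>M) = 0"
      if vL: "v \<in> L2k M x0 w k" for v
    proof -
      have H: "0 \<le> 2 * r * (\<integral>\<omega>. v \<omega> \<bullet> \<Lambda> \<omega> \<partial>M) + r\<^sup>2 * cvx M A B C D Q R G w N k v" for r
      proof -
        have vrL: "(\<lambda>\<omega>. r *\<^sub>R v \<omega>) \<in> L2k M x0 w k"
        proof (rule L2kI)
          show "(\<lambda>\<omega>. r *\<^sub>R v \<omega>) \<in> borel_measurable (FF k)"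
            using L2k_FF[OF vL] by measurable
          show "sq (\<lambda>\<omega>. r *\<^sub>R v \<omega>)" by (rule sq_scaleR[OF L2k_sq[OF vL]])
        qed
        have ubL: "(\<lambda>\<omega>. u k \<omega> + r *\<^sub>R v \<omega>) \<in> L2k M x0 w k"
        proof (rule L2kI)
          show "(\<lambda>\<omega>. u k \<omega> + r *\<^sub>R v \<omega>) \<in> borel_measurable (FF k)"
            using L2k_FF[OF vL] L2k_FF[OF ukL] by measurable
          show "sq (\<lambda>\<omega>. u k \<omega> + r *\<^sub>R v \<omega>)" by (rule sq_add[OF L2k_sq[OF ukL] L2k_sq[OF vrL]])
        qed
        note E = expand[where A=A and B=B and C=C and D=D and Q=Q and R=R and G=G and N=N and k=k
      and y=y and u=u and v="\<lambda>\<omega>. r *\<^sub>R v \<omega>" and Z=Z, OF kN Qk Rk Gk yL uL vrL Zsq ZE ZN]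
        have J: "Jcost M A B C D Q R G w N k y u \<le> Jcost M A B C D Q R G w N k y (u(k := (\<lambda>\<omega>. u k \<omega> + r *\<^sub>R v \<omega>)))"
          using OL[OF k ubL] unfolding y_def .
        have I: "(\<integral>\<omega>. (r *\<^sub>R v \<omega>) \<bullet> lam M x0 w B D R k u Z \<omega> \<partial>M) = r * (\<integral>\<omega>. v \<omega> \<bullet> \<Lambda> \<omega> \<partial>M)"
          unfolding \<Lambda>_def by simp
        show ?thesis using J E I cvx_scale[of M A B C D Q R G w N k r v] by (simp add: \<Lambda>_def mult.assoc)
      qed
      show ?thesis using quad_nonneg[OF H] by simp
    qed
    have LL0: "AE \<omega> in M. \<Lambda> \<omega> = 0"
    proof -
      have "(\<integral>\<omega>. \<Lambda> \<omega> \<bullet> \<Lambda> \<omega> \<partial>M) = 0" using key[OF LL] by simp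
      moreover have "integrable M (\<lambda>\<omega>. \<Lambda> \<omega> \<bullet> \<Lambda> \<omega>)" using L2k_sq[OF LL] by (intro sq_inner)
      ultimately have "AE \<omega> in M. \<Lambda> \<omega> \<bullet> \<Lambda> \<omega> = 0"
        using integral_nonneg_eq_0_iff_AE[of M "\<lambda>\<omega>. \<Lambda> \<omega> \<bullet> \<Lambda> \<omega>"] by simp
      then show ?thesis by eventually_elim simp
    qed
    let ?Xk = "traj (A k) (B k) (C k) (D k) w k (eqstate A B C D w t x u k) u"
    show "let Xk = ?Xk; F = Fprev M x0 w in
         (\<exists>Z. (\<forall>l\<in>{k..N}. Z l \<in> borel_measurable M \<and> integrable M (\<lambda>\<omega>. (norm (Z l \<omega>))\<^sup>2)) \<and>
            (\<forall>l\<in>{k..<N}. AE \<omega> in M. Z l \<omega> =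
                 transpose (A k l) *v cexp M (F l) (Z (Suc l)) \<omega>
               + transpose (C k l) *v cexp M (F l) (\<lambda>\<eta>. w l \<eta> *\<^sub>R Z (Suc l) \<eta>) \<omega>
               + Q k l *v Xk l \<omega>) \<and>
            (AE \<omega> in M. Z N \<omega> = G k *v Xk N \<omega>) \<and>
            (AE \<omega> in M. 0 = R k k *v u k \<omega>
               + transpose (B k k) *v cexp M (F k) (Z (Suc k)) \<omega>
               + transpose (D k k) *v cexp M (F k) (\<lambda>\<eta>. w k \<eta> *\<^sub>R Z (Suc k) \<eta>) \<omega>))
         \<and>
         (INF ubar\<in>L2k M x0 w k.
            (let Y = traj (A k) (B k) (C k) (D k) w k (\<lambda>\<omega>. 0) (\<lambda>l. if l = k then ubar else (\<lambda>\<omega>. 0)) in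
             ereal ((\<Sum>l=k..<N. (\<integral>\<omega>. Y l \<omega> \<bullet> (Q k l *v Y l \<omega>) \<partial>M))
                    + (\<integral>\<omega>. ubar \<omega> \<bullet> (R k k *v ubar \<omega>) \<partial>M)
                    + (\<integral>\<omega>. Y N \<omega> \<bullet> (G k *v Y N \<omega>) \<partial>M)))) \<ge> 0"
    proof -
      have ex: "\<exists>Z. (\<forall>l\<in>{k..N}. Z l \<in> borel_measurable M \<and> integrable M (\<lambda>\<omega>. (norm (Z l \<omega>))\<^sup>2)) \<and>
            (\<forall>l\<in>{k..<N}. AE \<omega> in M. Z l \<omega> =
                 transpose (A k l) *v cexp M (FF l) (Z (Suc l)) \<omega>
               + transpose (C k l) *v cexp M (FF l) (\<lambda>\<eta>. w l \<eta> *\<^sub>R Z (Suc l) \<eta>) \<omega>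
               + Q k l *v ?Xk l \<omega>) \<and>
            (AE \<omega> in M. Z N \<omega> = G k *v ?Xk N \<omega>) \<and>
            (AE \<omega> in M. 0 = R k k *v u k \<omega>
               + transpose (B k k) *v cexp M (FF k) (Z (Suc k)) \<omega>
               + transpose (D k k) *v cexp M (FF k) (\<lambda>\<eta>. w k \<eta> *\<^sub>R Z (Suc k) \<eta>) \<omega>)"
      proof (intro exI conjI)
        show "\<forall>l\<in>{k..N}. Z l \<in> borel_measurable M \<and> integrable M (\<lambda>\<omega>. (norm (Z l \<omega>))\<^sup>2)"
          using Zsq by (simp add: sq_def)
        show "\<forall>l\<in>{k..<N}. AE \<omega> in M. Z l \<omega> =
                 transpose (A k l) *v cexp M (FF l) (Z (Suc l)) \<omega>
               + transpose (C k l) *v cexp M (FF l) (\<lambda>\<eta>. w l \<eta> *\<^sub>R Z (Suc l) \<eta>) \<omega>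
               + Q k l *v ?Xk l \<omega>" using ZE unfolding y_def .
        show "AE \<omega> in M. Z N \<omega> = G k *v ?Xk N \<omega>" using ZN unfolding y_def .
        show "AE \<omega> in M. 0 = R k k *v u k \<omega>
               + transpose (B k k) *v cexp M (FF k) (Z (Suc k)) \<omega>
               + transpose (D k k) *v cexp M (FF k) (\<lambda>\<eta>. w k \<eta> *\<^sub>R Z (Suc k) \<eta>) \<omega>"
          using LL0 by eventually_elim (simp add: \<Lambda>_def lam_def)
      qed
      have inf: "(INF ubar\<in>L2k M x0 w k. ereal (cvx M A B C D Q R G w N k ubar)) \<ge> 0"
      proof (rule INF_greatest)
        fix ubar :: "'a \<Rightarrow> real^'m" assume "ubar \<in> L2k M x0 w k"
        then show "0 \<le> ereal (cvx M A B C D Q R G w N k ubar)" using key by simp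
      qed
      show ?thesis using ex inf unfolding cvx_def Let_def by simp
    qed
  qed
qed

end

theorem theorem2p1:
  fixes M :: "'a measure"
    and x0 :: "'a \<Rightarrow> real^'n"
    and w :: "nat \<Rightarrow> 'a \<Rightarrow> real"
    and A C :: "nat \<Rightarrow> nat \<Rightarrow> real^'n^'n"
    and B D :: "nat \<Rightarrow> nat \<Rightarrow> real^'m^'n"
    and Q :: "nat \<Rightarrow> nat \<Rightarrow> real^'n^'n"
    and R :: "nat \<Rightarrow> nat \<Rightarrow> real^'m^'m"
    and G :: "nat \<Rightarrow> real^'n^'n"
    and N t :: nat
    and x :: "'a \<Rightarrow> real^'n"
  assumes "prob_space M"
    and "x0 \<in> borel_measurable M"
    and "\<And>k. w k \<in> borel_measurable M"
    and "\<And>k. integrable M (w k)"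
    and "\<And>k. AE \<omega> in M. real_cond_exp M (Fprev M x0 w k) (w k) \<omega> = 0"
    and "\<And>k. integrable M (\<lambda>\<omega>. (w k \<omega>)\<^sup>2)"
    and "\<And>k. AE \<omega> in M. real_cond_exp M (Fprev M x0 w k) (\<lambda>\<omega>. (w k \<omega>)\<^sup>2) \<omega> = 1"
    and "\<And>s k. s < N \<Longrightarrow> s \<le> k \<Longrightarrow> k < N \<Longrightarrow> transpose (Q s k) = Q s k"
    and "\<And>s k. s < N \<Longrightarrow> s \<le> k \<Longrightarrow> k < N \<Longrightarrow> transpose (R s k) = R s k"
    and "\<And>s. s < N \<Longrightarrow> transpose (G s) = G s"
    and "0 < N"
    and "t < N"
    and "x \<in> L2k M x0 w t"
  shows "((\<exists>u. open_loop_equilibrium M x0 A B C D Q R G w N t x u)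
            \<longleftrightarrow> (\<exists>u. cond_ii M x0 A B C D Q R G w N t x u))
         \<and> (\<forall>u. cond_ii M x0 A B C D Q R G w N t x u
                 \<longrightarrow> open_loop_equilibrium M x0 A B C D Q R G w N t x u)"
proof -
  have L: "lqs M x0 w"
    unfolding lqs_def lqs_axioms_def using assms(1,2,3,6,7) by blast
  interpret lqs M x0 w by (rule L)
  have ii_i: "cond_ii M x0 A B C D Q R G w N t x u \<Longrightarrow> open_loop_equilibrium M x0 A B C D Q R G w N t x u"
    for u by (rule ii_to_i[OF assms(8) assms(9) assms(10) assms(13)])
  have i_ii: "open_loop_equilibrium M x0 A B C D Q R G w N t x u \<Longrightarrow> cond_ii M x0 A B C D Q R G w N t x u"
    for u by (rule i_to_ii[OF assms(8) assms(9) assms(10) assms(13)])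
  show ?thesis using ii_i i_ii by blast
qed

end
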